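(* Let $\zeta$ be the $\mathbb P_0$-almost sure limit of $-\frac1t\log L_t(\mathcal X^t)$ (the Neyman–Pearson error exponent for the probability of miss). Then $\underline\zeta\le\zeta$, where $\underline\zeta$ is the optimal value (infimum) of $$\begin{array}{ll}\text{minimize over }(\theta,\xi) & D(\theta\|P)+\sum_{i:\overline\theta_i>0}\overline\theta_i\frac{(\beta_i-\xi_i/\overline\theta_i)^2}{2}\\ \text{subject to}& H(\theta)\ge J_\theta(\xi),\quad\theta\in\Delta,\quad\xi\in\mathbb R^N.\end{array}$$
   Context: $V=\{1,\dots,N\}$; $P$ row-stochastic, irreducible, aperiodic, with stationary distribution $\pi>0$; $E=\{(i,j):P_{ij}>0\}$; $\beta_1,\dots,\beta_N\in\mathbb R$. $P(s^t)=\pi_{s_1}\prod_{k=1}^{t-1}P_{s_ks_{k+1}}$, $\mathcal S^t=\{s^t\in V^t:P(s^t)>0\}$. Under $\mathcal H_0$ (law $\mathbb P_0$) the $X_{i,k}$ ($i\in V,k\ge1$) are i.i.d. $\mathcal N(0,1)$; under $\mathcal H_1$ a Markov chain $(S_k)$ with initial law $\pi$ and transition matrix $P$ is present and conditionally on it $X_{i,k}\sim\mathcal N(\beta_i,1)$ if $S_k=i$, $\mathcal N(0,1)$ otherwise, independently. $L_t(\mathcal X^t)=\sum_{s^t\in\mathcal S^t}P(s^t)\exp\big(\sum_{k=1}^t(\beta_{s_k}X_{s_k,k}-\beta_{s_k}^2/2)\big)$. $\Delta=\{\theta\in\mathbb R^{N\times N}:\theta_{ij}\ge0,\sum_{i,j}\theta_{ij}=1,\sum_j\theta_{ij}=\sum_j\theta_{ji}\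 \forall i,\ \theta_{ij}=0\text{ if }(i,j)\notin E\}$, $\overline\theta=\theta\mathbf1$. $H(\theta)=-\sum_{i,j}\theta_{ij}\log\frac{\theta_{ij}}{\overline\theta_i}$, $D(\theta\|P)=\sum_{i,j}\theta_{ij}\log\frac{\theta_{ij}}{\overline\theta_iP_{ij}}$ (terms with $\theta_{ij}=0$ are $0$). $J_\theta(\xi)=\sum_{i:\overline\theta_i>0}\frac{1}{\overline\theta_i}\frac{\xi_i^2}{2}$ if $\xi_i=0$ whenever $\overline\theta_i=0$, and $+\infty$ otherwise. *)

theory Defs
  imports "HOL-Probability.Probability"
begin

text \<open>States are V = {1..N}. Matrices are functions nat => nat => real, vectors nat => real.\<close>

fun mpow :: "nat \<Rightarrow> (nat \<Rightarrow> nat \<Rightarrow> real) \<Rightarrow> nat \<Rightarrow> nat \<Rightarrow> nat \<Rightarrow> real" where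
  "mpow N P 0 i j = (if i = j then 1 else 0)"
| "mpow N P (Suc n) i j = (\<Sum>k\<in>{1..N}. mpow N P n i k * P k j)"

definition row_stochastic :: "nat \<Rightarrow> (nat \<Rightarrow> nat \<Rightarrow> real) \<Rightarrow> bool" where
  "row_stochastic N P \<longleftrightarrow>
     (\<forall>i\<in>{1..N}. \<forall>j\<in>{1..N}. P i j \<ge> 0) \<and> (\<forall>i\<in>{1..N}. (\<Sum>j\<in>{1..N}. P i j) = 1)"

definition irreducible_chain :: "nat \<Rightarrow> (nat \<Rightarrow> nat \<Rightarrow> real) \<Rightarrow> bool" where
  "irreducible_chain N P \<longleftrightarrow> (\<forall>i\<in>{1..N}. \<forall>j\<in>{1..N}. \<exists>n\<ge>1. mpow N P n i j > 0)"

definition aperiodic_chain :: "nat \<Rightarrow> (nat \<Rightarrow> nat \<Rightarrow> real) \<Rightarrow> bool" where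
  "aperiodic_chain N P \<longleftrightarrow> (\<forall>i\<in>{1..N}. Gcd {n::nat. n \<ge> 1 \<and> mpow N P n i i > 0} = 1)"

definition stationary_pos :: "nat \<Rightarrow> (nat \<Rightarrow> nat \<Rightarrow> real) \<Rightarrow> (nat \<Rightarrow> real) \<Rightarrow> bool" where
  "stationary_pos N P \<pi> \<longleftrightarrow> (\<forall>i\<in>{1..N}. \<pi> i > 0) \<and> (\<Sum>i\<in>{1..N}. \<pi> i) = 1 \<and>
     (\<forall>j\<in>{1..N}. (\<Sum>i\<in>{1..N}. \<pi> i * P i j) = \<pi> j)"

definition edges :: "nat \<Rightarrow> (nat \<Rightarrow> nat \<Rightarrow> real) \<Rightarrow> (nat \<times> nat) set" where
  "edges N P = {(i, j). i \<in> {1..N} \<and> j \<in> {1..N} \<and> P i j > 0}"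

definition path_prob :: "(nat \<Rightarrow> real) \<Rightarrow> (nat \<Rightarrow> nat \<Rightarrow> real) \<Rightarrow> nat list \<Rightarrow> real" where
  "path_prob \<pi> P s = \<pi> (s ! 0) * (\<Prod>k<length s - 1. P (s ! k) (s ! (k + 1)))"

definition paths :: "nat \<Rightarrow> (nat \<Rightarrow> real) \<Rightarrow> (nat \<Rightarrow> nat \<Rightarrow> real) \<Rightarrow> nat \<Rightarrow> nat list set" where
  "paths N \<pi> P t = {s. length s = t \<and> set s \<subseteq> {1..N} \<and> path_prob \<pi> P s > 0}"

text \<open>Likelihood ratio L_t; x i k is the observation X_{i,k} (k >= 1); s ! (k-1) = s_k.\<close>
definition lik :: "nat \<Rightarrow> (nat \<Rightarrow> real) \<Rightarrow> (nat \<Rightarrow> nat \<Rightarrow> real) \<Rightarrow> (nat \<Rightarrow> real) \<Rightarrow> nat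
    \<Rightarrow> (nat \<Rightarrow> nat \<Rightarrow> real) \<Rightarrow> real" where
  "lik N \<pi> P \<beta> t x = (\<Sum>s\<in>paths N \<pi> P t. path_prob \<pi> P s *
      exp (\<Sum>k<t. \<beta> (s ! k) * x (s ! k) (k + 1) - (\<beta> (s ! k))\<^sup>2 / 2))"

definition Delta :: "nat \<Rightarrow> (nat \<Rightarrow> nat \<Rightarrow> real) \<Rightarrow> (nat \<Rightarrow> nat \<Rightarrow> real) set" where
  "Delta N P = {\<theta>. (\<forall>i j. \<theta> i j \<ge> 0) \<and> (\<Sum>i\<in>{1..N}. \<Sum>j\<in>{1..N}. \<theta> i j) = 1 \<and>
      (\<forall>i\<in>{1..N}. (\<Sum>j\<in>{1..N}. \<theta> i j) = (\<Sum>j\<in>{1..N}. \<theta> j i)) \<and>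
      (\<forall>i j. (i, j) \<notin> edges N P \<longrightarrow> \<theta> i j = 0)}"

definition tbar :: "nat \<Rightarrow> (nat \<Rightarrow> nat \<Rightarrow> real) \<Rightarrow> nat \<Rightarrow> real" where
  "tbar N \<theta> i = (\<Sum>j\<in>{1..N}. \<theta> i j)"

definition entr :: "nat \<Rightarrow> (nat \<Rightarrow> nat \<Rightarrow> real) \<Rightarrow> real" where
  "entr N \<theta> = - (\<Sum>i\<in>{1..N}. \<Sum>j\<in>{1..N}.
      (if \<theta> i j = 0 then 0 else \<theta> i j * ln (\<theta> i j / tbar N \<theta> i)))"

definition kl_div :: "nat \<Rightarrow> (nat \<Rightarrow> nat \<Rightarrow> real) \<Rightarrow> (nat \<Rightarrow> nat \<Rightarrow> real) \<Rightarrow> real" where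
  "kl_div N \<theta> P = (\<Sum>i\<in>{1..N}. \<Sum>j\<in>{1..N}.
      (if \<theta> i j = 0 then 0 else \<theta> i j * ln (\<theta> i j / (tbar N \<theta> i * P i j))))"

definition Jfun :: "nat \<Rightarrow> (nat \<Rightarrow> nat \<Rightarrow> real) \<Rightarrow> (nat \<Rightarrow> real) \<Rightarrow> ereal" where
  "Jfun N \<theta> \<xi> = (if \<forall>i\<in>{1..N}. tbar N \<theta> i = 0 \<longrightarrow> \<xi> i = 0
     then ereal (\<Sum>i\<in>{i\<in>{1..N}. tbar N \<theta> i > 0}. (1 / tbar N \<theta> i) * ((\<xi> i)\<^sup>2 / 2))
     else \<infinity>)"

definition objective :: "nat \<Rightarrow> (nat \<Rightarrow> nat \<Rightarrow> real) \<Rightarrow> (nat \<Rightarrow> real) \<Rightarrow> (nat \<Rightarrow> nat \<Rightarrow> real)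
    \<Rightarrow> (nat \<Rightarrow> real) \<Rightarrow> real" where
  "objective N P \<beta> \<theta> \<xi> = kl_div N \<theta> P +
     (\<Sum>i\<in>{i\<in>{1..N}. tbar N \<theta> i > 0}. tbar N \<theta> i * (\<beta> i - \<xi> i / tbar N \<theta> i)\<^sup>2 / 2)"

definition zeta_low :: "nat \<Rightarrow> (nat \<Rightarrow> nat \<Rightarrow> real) \<Rightarrow> (nat \<Rightarrow> real) \<Rightarrow> ereal" where
  "zeta_low N P \<beta> = (INF p \<in> {(\<theta>, \<xi>). \<theta> \<in> Delta N P \<and> Jfun N \<theta> \<xi> \<le> ereal (entr N \<theta>)}.
      ereal (objective N P \<beta> (fst p) (snd p)))"

end

theory Submission
  imports Defs
begin

lemma core_real:
  fixes D H B z p0 Bm :: real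
  assumes H: "H \<ge> 0" and B: "B \<ge> 0" "B \<le> Bm" and p0: "0 < p0" "p0 \<le> 1"
    and h: "\<And>q. 0 \<le> q \<Longrightarrow> q \<le> 1 \<Longrightarrow> q\<^sup>2 * B \<le> H \<Longrightarrow> z \<le> D + (1-q)\<^sup>2 * B"
  shows "\<exists>p. p0 \<le> p \<and> p \<le> 1 \<and> p * (z - 2*p0*Bm) \<le> p*(D+H) + p*(1-p)*B - H"
proof (cases "B \<le> H")
  case True
  have "z \<le> D" using h[of 1] True by simp
  moreover have "0 \<le> 2*p0*Bm" using p0 B by simp
  ultimately show ?thesis using p0 by (intro exI[of _ 1]) (auto simp: algebra_simps)
next
  case False
  hence Bpos: "B > 0" using H by linarith
  show ?thesis
  proof (cases "p0\<^sup>2 * B \<le> H")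
    case True
    define p where "p = sqrt (H / B)"
    have p2: "p\<^sup>2 = H / B" unfolding p_def using H Bpos by simp
    have pB: "p\<^sup>2 * B = H" using p2 Bpos by simp
    have pge: "p0 \<le> p" unfolding p_def using True Bpos p0
      by (metis less_eq_real_def mult_imp_le_div_pos real_le_rsqrt)
    have ple: "p \<le> 1" unfolding p_def using False Bpos by (simp add: real_sqrt_le_1_iff)
    have p0': "p \<ge> 0" using pge p0 by simp
    have zz: "z \<le> D + (1-p)\<^sup>2 * B" using h[of p] p0' ple pB by simp
    have "p * z \<le> p * (D + (1-p)\<^sup>2 * B)" using zz p0' by (simp add: mult_left_mono)
    also have "\<dots> = p*(D+H) + p*(1-p)*B - H"
      using pB by (simp add: power2_eq_square algebra_simps)
    finally have "p * z \<le> p*(D+H) + p*(1-p)*B - H" .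
    moreover have "p * (2*p0*Bm) \<ge> 0" using p0' p0 B by simp
    ultimately show ?thesis using pge ple by (intro exI[of _ p]) (auto simp: algebra_simps)
  next
    case False2: False
    have zz: "z \<le> D + B" using h[of 0] H by simp
    have "p0 * (z - 2*p0*Bm) \<le> p0 * (D + B - 2*p0*B)"
    proof (rule mult_left_mono)
      have "p0 * B \<le> p0 * Bm" using B p0 by (intro mult_left_mono) auto
      then show "z - 2*p0*Bm \<le> D + B - 2*p0*B" using zz by linarith
    qed (use p0 in auto)
    also have "\<dots> \<le> p0*(D+H) + p0*(1-p0)*B - H"
      using False2 H p0 by (simp add: power2_eq_square algebra_simps)
        (smt (verit) mult_nonneg_nonneg)
    finally show ?thesis using p0 by (intro exI[of _ p0]) auto
  qed
qed


lemma tbar_nonneg: "\<theta> \<in> Delta N P \<Longrightarrow> tbar N \<theta> i \<ge> 0"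
  unfolding Delta_def tbar_def by (auto intro: sum_nonneg)

lemma tbar_le1: assumes "\<theta> \<in> Delta N P" "i \<in> {1..N}" shows "tbar N \<theta> i \<le> 1"
proof -
  have "tbar N \<theta> i \<le> (\<Sum>i\<in>{1..N}. tbar N \<theta> i)"
    using assms by (intro member_le_sum) (auto intro: tbar_nonneg)
  also have "\<dots> = 1" using assms unfolding Delta_def tbar_def by auto
  finally show ?thesis .
qed

lemma entr_nonneg: assumes "\<theta> \<in> Delta N P" shows "entr N \<theta> \<ge> 0"
proof -
  have "(if \<theta> i j = 0 then 0 else \<theta> i j * ln (\<theta> i j / tbar N \<theta> i)) \<le> 0"
    if "i \<in> {1..N}" "j \<in> {1..N}" for i j
  proof (cases "\<theta> i j = 0")
    case False
    have pos: "\<theta> i j > 0" using False assms unfolding Delta_def by (auto simp: order_le_less)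
    have le: "\<theta> i j \<le> tbar N \<theta> i" unfolding tbar_def using assms that
      by (intro member_le_sum) (auto simp: Delta_def)
    have "ln (\<theta> i j / tbar N \<theta> i) \<le> 0" using pos le by simp
    then show ?thesis using False pos by (simp add: mult_nonneg_nonpos)
  qed simp
  then have "(\<Sum>i\<in>{1..N}. \<Sum>j\<in>{1..N}. (if \<theta> i j = 0 then 0 else \<theta> i j * ln (\<theta> i j / tbar N \<theta> i))) \<le> 0"
    by (intro sum_nonpos) auto
  then show ?thesis unfolding entr_def by simp
qed

definition Bq :: "nat \<Rightarrow> (nat \<Rightarrow> real) \<Rightarrow> (nat \<Rightarrow> nat \<Rightarrow> real) \<Rightarrow> real" where
  "Bq N \<beta> \<theta> = (\<Sum>i\<in>{1..N}. tbar N \<theta> i * (\<beta> i)\<^sup>2 / 2)"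

definition Bmax :: "nat \<Rightarrow> (nat \<Rightarrow> real) \<Rightarrow> real" where
  "Bmax N \<beta> = (\<Sum>i\<in>{1..N}. (\<beta> i)\<^sup>2 / 2)"

lemma Bq_nonneg: "\<theta> \<in> Delta N P \<Longrightarrow> Bq N \<beta> \<theta> \<ge> 0"
  unfolding Bq_def by (intro sum_nonneg divide_nonneg_pos mult_nonneg_nonneg) (auto intro: tbar_nonneg)

lemma Bq_le: "\<theta> \<in> Delta N P \<Longrightarrow> Bq N \<beta> \<theta> \<le> Bmax N \<beta>"
  unfolding Bq_def Bmax_def
  by (intro sum_mono) (auto intro!: mult_left_le_one_le tbar_le1 tbar_nonneg divide_nonneg_pos)

lemma feasible_q:
  fixes q :: real
  assumes th: "\<theta> \<in> Delta N P"
  shows "Jfun N \<theta> (\<lambda>i. q * \<beta> i * tbar N \<theta> i) = ereal (q\<^sup>2 * Bq N \<beta> \<theta>)"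
    and "objective N P \<beta> \<theta> (\<lambda>i. q * \<beta> i * tbar N \<theta> i) = kl_div N \<theta> P + (1-q)\<^sup>2 * Bq N \<beta> \<theta>"
proof -
  let ?S = "{i\<in>{1..N}. tbar N \<theta> i > 0}"
  have ext: "(\<Sum>i\<in>?S. f i) = (\<Sum>i\<in>{1..N}. f i)" if "\<And>i. i \<in> {1..N} \<Longrightarrow> tbar N \<theta> i = 0 \<Longrightarrow> f i = 0" for f
  proof (rule sum.mono_neutral_left)
    show "\<forall>i\<in>{1..N} - ?S. f i = 0"
    proof
      fix i assume i: "i \<in> {1..N} - ?S"
      then have "tbar N \<theta> i = 0" using tbar_nonneg[OF th, of i] by auto
      then show "f i = 0" using that i by auto
    qed
  qed auto
  have "(\<Sum>i\<in>?S. 1 / tbar N \<theta> i * ((q * \<beta> i * tbar N \<theta> i)\<^sup>2 / 2)) = (\<Sum>i\<in>?S. q\<^sup>2 * (tbar N \<theta> i * (\<beta> i)\<^sup>2 / 2))"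
    by (intro sum.cong) (auto simp: power2_eq_square field_simps)
  also have "\<dots> = (\<Sum>i\<in>{1..N}. q\<^sup>2 * (tbar N \<theta> i * (\<beta> i)\<^sup>2 / 2))" by (rule ext) simp
  finally show "Jfun N \<theta> (\<lambda>i. q * \<beta> i * tbar N \<theta> i) = ereal (q\<^sup>2 * Bq N \<beta> \<theta>)"
    unfolding Jfun_def Bq_def by (simp add: sum_distrib_left)
  have "(\<Sum>i\<in>?S. tbar N \<theta> i * (\<beta> i - q * \<beta> i * tbar N \<theta> i / tbar N \<theta> i)\<^sup>2 / 2)
      = (\<Sum>i\<in>?S. (1-q)\<^sup>2 * (tbar N \<theta> i * (\<beta> i)\<^sup>2 / 2))"
    by (intro sum.cong) (auto simp: power2_eq_square field_simps)
  also have "\<dots> = (\<Sum>i\<in>{1..N}. (1-q)\<^sup>2 * (tbar N \<theta> i * (\<beta> i)\<^sup>2 / 2))" by (rule ext) simp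
  finally show "objective N P \<beta> \<theta> (\<lambda>i. q * \<beta> i * tbar N \<theta> i) = kl_div N \<theta> P + (1-q)\<^sup>2 * Bq N \<beta> \<theta>"
    unfolding objective_def Bq_def by (simp add: sum_distrib_left)
qed

lemma core_theta:
  assumes th: "\<theta> \<in> Delta N P"
    and z: "\<And>\<theta> \<xi>. \<theta> \<in> Delta N P \<Longrightarrow> Jfun N \<theta> \<xi> \<le> ereal (entr N \<theta>) \<Longrightarrow> z \<le> objective N P \<beta> \<theta> \<xi>"
    and p0: "0 < p0" "p0 \<le> 1"
  shows "\<exists>p. p0 \<le> p \<and> p \<le> 1 \<and> p * (z - 2*p0*Bmax N \<beta>) \<le>
     p*(kl_div N \<theta> P + entr N \<theta>) + p*(1-p)*Bq N \<beta> \<theta> - entr N \<theta>"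
proof (rule core_real[OF entr_nonneg[OF th] Bq_nonneg[OF th] Bq_le[OF th] p0])
  fix q :: real assume "0 \<le> q" "q \<le> 1" "q\<^sup>2 * Bq N \<beta> \<theta> \<le> entr N \<theta>"
  then show "z \<le> kl_div N \<theta> P + (1 - q)\<^sup>2 * Bq N \<beta> \<theta>"
    using z[OF th, of "\<lambda>i. q * \<beta> i * tbar N \<theta> i"] feasible_q[OF th, where q=q and \<beta>=\<beta>] by simp
qed


fun ws :: "nat list \<Rightarrow> (nat \<times> nat) list" where
  "ws (x # y # ys) = (x, y) # ws (y # ys)"
| "ws _ = []"

lemma length_ws[simp]: "length (ws w) = length w - 1"
  by (induction w rule: ws.induct) auto

lemma map_fst_ws: "map fst (ws w) = butlast w"
  by (induction w rule: ws.induct) auto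

lemma map_snd_ws: "map snd (ws w) = tl w"
  by (induction w rule: ws.induct) auto

lemma ws_Cons: "xs \<noteq> [] \<Longrightarrow> ws (x # xs) = (x, hd xs) # ws xs"
  by (cases xs) auto

lemma ws_append_tl:
  "xs \<noteq> [] \<Longrightarrow> r \<noteq> [] \<Longrightarrow> last xs = hd r \<Longrightarrow> ws (xs @ tl r) = ws xs @ ws r"
proof (induction xs)
  case (Cons x xs)
  show ?case
  proof (cases "xs = []")
    case True
    then show ?thesis using Cons.prems by (cases r) auto
  next
    case False
    then have "ws (x # xs @ tl r) = (x, hd xs) # ws (xs @ tl r)"
      by (simp add: ws_Cons)
    also have "\<dots> = (x, hd xs) # ws xs @ ws r" using Cons False by simp
    finally show ?thesis using False by (simp add: ws_Cons)
  qed
qed simp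

lemma ws_snoc: "w \<noteq> [] \<Longrightarrow> ws (w @ [j]) = ws w @ [(last w, j)]"
  using ws_append_tl[of w "[last w, j]"] by simp

lemma prod_list_ws:
  "prod_list (map f (ws s)) = (\<Prod>k<length s - 1. f (s!k, s!(k+1)))"
proof (induction s rule: ws.induct)
  case (1 x y ys)
  have "(\<Prod>k<length (x # y # ys) - 1. f ((x # y # ys) ! k, (x # y # ys) ! (k + 1)))
      = f (x, y) * (\<Prod>k<length (y # ys) - 1. f ((y # ys) ! k, (y # ys) ! (k + 1)))"
    by (simp add: prod.lessThan_Suc_shift del: prod.lessThan_Suc)
  then show ?case using 1 by simp
qed auto

lemma sum_list_nth: "sum_list (map g s) = (\<Sum>k<length s. g (s!k))"
  by (simp add: sum_list_sum_nth atLeast0LessThan)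

lemma prod_list_pos_each:
  fixes g :: "'a \<Rightarrow> real"
  shows "prod_list (map g xs) > 0 \<Longrightarrow> (\<And>x. x \<in> set xs \<Longrightarrow> g x \<ge> 0) \<Longrightarrow> x \<in> set xs \<Longrightarrow> g x > 0"
proof (induction xs)
  case (Cons a xs)
  have ga: "g a \<ge> 0" and gp: "prod_list (map g xs) \<ge> 0"
    using Cons.prems by (auto intro!: prod_list_nonneg)
  have pos: "g a * prod_list (map g xs) > 0" using Cons.prems by simp
  then have "g a > 0" "prod_list (map g xs) > 0" using ga gp
    by (auto simp: zero_less_mult_iff)
  then show ?case using Cons by auto
qed simp

lemma prod_list_exp_ln:
  fixes g :: "'a \<Rightarrow> real"
  shows "(\<And>x. x \<in> set xs \<Longrightarrow> g x > 0) \<Longrightarrow> prod_list (map g xs) = exp (sum_list (map (\<lambda>x. ln (g x)) xs))"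
  by (induction xs) (auto simp: exp_add)

lemma count_list_map_fst:
  "sum_list (map (\<lambda>e. if fst e = i then 1 else 0) xs) = real (count_list (map fst xs) i)"
  by (induction xs) auto

lemma count_list_map_snd:
  "sum_list (map (\<lambda>e. if snd e = i then 1 else 0) xs) = real (count_list (map snd xs) i)"
  by (induction xs) auto

lemma closed_count:
  assumes "w \<noteq> []" "hd w = last w"
  shows "count_list (butlast w) i = count_list (tl w) i"
proof (cases w)
  case (Cons a ys)
  show ?thesis
  proof (cases "ys = []")
    case False
    then have "ys = butlast ys @ [a]" using assms Cons by (metis append_butlast_last_id last_ConsR list.sel(1))
    moreover have "butlast w = a # butlast ys" using Cons False by simp
    ultimately show ?thesis using Cons by (metis count_list.simps(2) count_list_append count_list.simps(1)
          list.sel(3) add.commute add_0)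
  qed (use Cons in simp)
qed (use assms in simp)

lemma sum_list_count_real:
  fixes f :: "'a \<Rightarrow> real"
  shows "set xs \<subseteq> X \<Longrightarrow> finite X \<Longrightarrow> sum_list (map f xs) = (\<Sum>e\<in>X. real (count_list xs e) * f e)"
proof (induction xs)
  case (Cons a xs)
  have "(\<Sum>e\<in>X. real (count_list (a # xs) e) * f e) = (\<Sum>e\<in>X. (if e = a then f e else 0) + real (count_list xs e) * f e)"
    by (intro sum.cong) (auto simp: algebra_simps)
  also have "\<dots> = f a + (\<Sum>e\<in>X. real (count_list xs e) * f e)"
    using Cons.prems by (simp add: sum.distrib)
  finally show ?case using Cons by simp
qed simp

lemma sum_ws_count:
  fixes f :: "nat \<times> nat \<Rightarrow> real"
  assumes "set (ws w) \<subseteq> A \<times> A" "finite A"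
  shows "sum_list (map f (ws w)) = (\<Sum>i\<in>A. \<Sum>j\<in>A. real (count_list (ws w) (i,j)) * f (i,j))"
proof -
  have "sum_list (map f (ws w)) = (\<Sum>e\<in>A\<times>A. real (count_list (ws w) e) * f e)"
    using sum_list_count_real[OF assms(1)] assms(2) by simp
  also have "\<dots> = (\<Sum>i\<in>A. \<Sum>j\<in>A. real (count_list (ws w) (i,j)) * f (i,j))"
    by (simp add: sum.cartesian_product)
  finally show ?thesis .
qed


lemma set_ws: "set (ws w) \<subseteq> set w \<times> set w"
  by (induction w rule: ws.induct) auto

lemma path_prob_ws: "s \<noteq> [] \<Longrightarrow> path_prob \<pi> P s = \<pi> (hd s) * prod_list (map (\<lambda>(i,j). P i j) (ws s))"
  unfolding path_prob_def by (simp add: prod_list_ws hd_conv_nth)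

locale chain =
  fixes N :: nat and P :: "nat \<Rightarrow> nat \<Rightarrow> real" and \<pi> \<beta> :: "nat \<Rightarrow> real"
  assumes N1: "N \<ge> 1" and rs: "row_stochastic N P" and irr: "irreducible_chain N P"
    and st: "stationary_pos N P \<pi>"
begin

abbreviation "V \<equiv> {1..N}"

lemma Pnn: "i \<in> V \<Longrightarrow> j \<in> V \<Longrightarrow> P i j \<ge> 0"
  using rs unfolding row_stochastic_def by auto

lemma pi_pos: "i \<in> V \<Longrightarrow> \<pi> i > 0"
  using st unfolding stationary_pos_def by auto

lemma pi_le1: assumes "i \<in> V" shows "\<pi> i \<le> 1"
proof -
  have "\<pi> i \<le> (\<Sum>i\<in>V. \<pi> i)" using assms pi_pos by (intro member_le_sum) (auto intro: less_imp_le)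
  then show ?thesis using st unfolding stationary_pos_def by auto
qed

definition wk :: "nat list \<Rightarrow> bool" where
  "wk w \<longleftrightarrow> w \<noteq> [] \<and> set w \<subseteq> V \<and> (\<forall>e\<in>set (ws w). P (fst e) (snd e) > 0)"

lemma mpow_nonneg: "i \<in> V \<Longrightarrow> j \<in> V \<Longrightarrow> mpow N P n i j \<ge> 0"
proof (induction n arbitrary: j)
  case (Suc n)
  then show ?case by (auto intro!: sum_nonneg mult_nonneg_nonneg Pnn)
qed simp

lemma walk_exists: "i \<in> V \<Longrightarrow> j \<in> V \<Longrightarrow> mpow N P n i j > 0 \<Longrightarrow> \<exists>w. wk w \<and> hd w = i \<and> last w = j"
proof (induction n arbitrary: j)
  case 0
  then have "i = j" by (simp split: if_splits)
  moreover have "wk [i]" using 0 unfolding wk_def by simp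
  ultimately show ?case by (intro exI[of _ "[i]"]) simp
next
  case (Suc n)
  have "\<exists>k\<in>V. mpow N P n i k * P k j > 0"
  proof (rule ccontr)
    assume "\<not> ?thesis"
    then have "(\<Sum>k\<in>V. mpow N P n i k * P k j) \<le> 0" by (intro sum_nonpos) (auto simp: not_less)
    then show False using Suc.prems by simp
  qed
  then obtain k where k: "k \<in> V" "mpow N P n i k * P k j > 0" by blast
  have "mpow N P n i k \<ge> 0" "P k j \<ge> 0" using k Suc.prems by (auto intro: mpow_nonneg Pnn)
  then have pos: "mpow N P n i k > 0" "P k j > 0" using k(2) by (auto simp: zero_less_mult_iff)
  obtain w where w: "wk w" "hd w = i" "last w = k" using Suc.IH[OF Suc.prems(1) k(1) pos(1)] by blast
  have wne: "w \<noteq> []" using w unfolding wk_def by simp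
  have ws': "ws (w @ [j]) = ws w @ [(k, j)]" using ws_snoc[OF wne] w by simp
  have "wk (w @ [j])" using w(1) Suc.prems(2) pos(2) unfolding wk_def ws' by auto
  moreover have "hd (w @ [j]) = i" using wne w by simp
  ultimately show ?case by (intro exI[of _ "w @ [j]"]) simp
qed

definition rw :: "nat \<Rightarrow> nat \<Rightarrow> nat list" where
  "rw i j = (SOME w. wk w \<and> hd w = i \<and> last w = j)"

lemma rw: assumes "i \<in> V" "j \<in> V" shows "wk (rw i j)" "hd (rw i j) = i" "last (rw i j) = j"
proof -
  obtain n where "mpow N P n i j > 0" using irr assms unfolding irreducible_chain_def by blast
  then have "\<exists>w. wk w \<and> hd w = i \<and> last w = j" using walk_exists assms by blast
  then have "wk (rw i j) \<and> hd (rw i j) = i \<and> last (rw i j) = j"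
    unfolding rw_def by (rule someI_ex)
  then show "wk (rw i j)" "hd (rw i j) = i" "last (rw i j) = j" by auto
qed

definition K :: nat where "K = Max ((\<lambda>(i,j). length (rw i j)) ` (V \<times> V))"

lemma rw_len: "i \<in> V \<Longrightarrow> j \<in> V \<Longrightarrow> length (rw i j) \<le> K" "i \<in> V \<Longrightarrow> j \<in> V \<Longrightarrow> length (rw i j) \<ge> 1"
proof -
  show "i \<in> V \<Longrightarrow> j \<in> V \<Longrightarrow> length (rw i j) \<le> K" unfolding K_def
    by (rule Max_ge) auto
  show "i \<in> V \<Longrightarrow> j \<in> V \<Longrightarrow> length (rw i j) \<ge> 1" using rw(1) unfolding wk_def
    by (cases "rw i j") auto
qed

definition pw :: "nat list \<Rightarrow> real" where "pw w = prod_list (map (\<lambda>(i,j). P i j) (ws w))"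

lemma pw_pos: "wk w \<Longrightarrow> pw w > 0"
  unfolding pw_def wk_def by (induction w rule: ws.induct) (auto simp: case_prod_beta)

definition cr :: real where "cr = Min ((\<lambda>(i,j). pw (rw i j)) ` (V \<times> V))"

lemma cr_pos: "cr > 0"
proof -
  have ne: "V \<times> V \<noteq> {}" using N1 by auto
  show ?thesis unfolding cr_def using ne
    by (subst Min_gr_iff) (auto intro!: pw_pos rw)
qed

lemma cr_le: "i \<in> V \<Longrightarrow> j \<in> V \<Longrightarrow> cr \<le> pw (rw i j)"
  unfolding cr_def by (rule Min_le) auto

definition cw :: "nat list \<Rightarrow> nat list" where
  "cw s = s @ tl (rw (last s) (hd s))"

lemma cw:
  assumes "wk s"
  shows "wk (cw s)" "hd (cw s) = hd s" "last (cw s) = hd s"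
    "ws (cw s) = ws s @ ws (rw (last s) (hd s))"
    "length (cw s) = length s + length (rw (last s) (hd s)) - 1"
proof -
  let ?r = "rw (last s) (hd s)"
  have sV: "set s \<subseteq> V" "s \<noteq> []" using assms unfolding wk_def by auto
  then have lh: "last s \<in> V" "hd s \<in> V" using last_in_set hd_in_set by blast+
  note r = rw[OF lh]
  have rne: "?r \<noteq> []" using r(1) unfolding wk_def by auto
  show wsc: "ws (cw s) = ws s @ ws ?r" unfolding cw_def
    using ws_append_tl[OF sV(2) rne] r(2) by simp
  show "hd (cw s) = hd s" unfolding cw_def using sV by simp
  show "last (cw s) = hd s"
  proof (cases "tl ?r = []")
    case True
    then have "?r = [hd ?r]" using rne by (cases ?r) auto
    then have "last ?r = hd ?r" by (metis last_ConsL)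
    then show ?thesis using True r unfolding cw_def by simp
  next
    case False
    then have "last (tl ?r) = last ?r" using rne by (cases ?r) auto
    then show ?thesis using False r unfolding cw_def by simp
  qed
  show "length (cw s) = length s + length ?r - 1" unfolding cw_def using rne by (cases ?r) auto
  have "set (tl ?r) \<subseteq> set ?r" by (cases ?r) auto
  then have "set (cw s) \<subseteq> V" using sV r(1) unfolding cw_def wk_def by auto
  moreover have "cw s \<noteq> []" using sV unfolding cw_def by simp
  moreover have "\<forall>e\<in>set (ws (cw s)). P (fst e) (snd e) > 0"
    unfolding wsc using assms r(1) unfolding wk_def by auto
  ultimately show "wk (cw s)" unfolding wk_def by blast
qed

lemma paths_wk: assumes "s \<in> paths N \<pi> P t" "t \<ge> 1" shows "wk s"
proof -
  have s: "length s = t" "set s \<subseteq> V" "path_prob \<pi> P s > 0" using assms unfolding paths_def by auto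
  then have ne: "s \<noteq> []" using assms by auto
  have hdV: "hd s \<in> V" using s ne hd_in_set by blast
  have "\<pi> (hd s) * pw s > 0" using s(3) path_prob_ws[OF ne] unfolding pw_def by simp
  then have "pw s > 0" using pi_pos[OF hdV] by (simp add: zero_less_mult_iff)
  have nn: "\<And>e. e \<in> set (ws s) \<Longrightarrow> (\<lambda>(i,j). P i j) e \<ge> 0"
  proof -
    fix e assume "e \<in> set (ws s)"
    then have "e \<in> set s \<times> set s" using set_ws[of s] by blast
    then have "fst e \<in> V" "snd e \<in> V" using s(2) by (auto simp del: atLeastAtMost_iff)
    then show "(\<lambda>(i,j). P i j) e \<ge> 0" using Pnn by (simp add: case_prod_beta)
  qed
  have "\<forall>e\<in>set (ws s). P (fst e) (snd e) > 0"
  proof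
    fix e assume e: "e \<in> set (ws s)"
    have "(\<lambda>(i,j). P i j) e > 0"
      using prod_list_pos_each[of "\<lambda>(i,j). P i j" "ws s", OF _ nn e] \<open>pw s > 0\<close> unfolding pw_def by blast
    then show "P (fst e) (snd e) > 0" by (simp add: case_prod_beta)
  qed
  then show ?thesis unfolding wk_def using ne s by auto
qed

end

context chain begin

definition T :: "nat list \<Rightarrow> nat" where "T s = length (ws (cw s))"
definition cnt :: "nat list \<Rightarrow> nat \<Rightarrow> nat \<Rightarrow> nat" where "cnt s i j = count_list (ws (cw s)) (i,j)"
definition th :: "nat list \<Rightarrow> nat \<Rightarrow> nat \<Rightarrow> real" where "th s i j = real (cnt s i j) / real (T s)"

lemma wsV: assumes "wk w" shows "set (ws w) \<subseteq> V \<times> V"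
  using set_ws[of w] assms unfolding wk_def by blast

lemma T_bounds: assumes "wk s"
  shows "length s - 1 \<le> T s" "T s \<le> length s + K - 2"
proof -
  have hl: "last s \<in> V" "hd s \<in> V" using assms unfolding wk_def
    using last_in_set hd_in_set by blast+
  have "T s = length s + length (rw (last s) (hd s)) - 2" unfolding T_def using cw(5)[OF assms] by simp
  then show "length s - 1 \<le> T s" "T s \<le> length s + K - 2" using rw_len[OF hl] by auto
qed

lemma sum_cw:
  fixes f :: "nat \<times> nat \<Rightarrow> real"
  assumes "wk s" "T s > 0"
  shows "sum_list (map f (ws (cw s))) = real (T s) * (\<Sum>i\<in>V. \<Sum>j\<in>V. th s i j * f (i,j))"
proof -
  have "sum_list (map f (ws (cw s))) = (\<Sum>i\<in>V. \<Sum>j\<in>V. real (cnt s i j) * f (i,j))"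
    unfolding cnt_def by (rule sum_ws_count[OF wsV[OF cw(1)[OF assms(1)]]]) simp
  also have "\<dots> = real (T s) * (\<Sum>i\<in>V. \<Sum>j\<in>V. th s i j * f (i,j))"
    unfolding th_def using assms(2) by (simp add: sum_distrib_left)
  finally show ?thesis .
qed

lemma cnt_pos_edge: assumes "wk s" "cnt s i j > 0" shows "(i,j) \<in> set (ws (cw s))" "i \<in> V" "j \<in> V" "P i j > 0"
proof -
  show e: "(i,j) \<in> set (ws (cw s))" using assms(2) count_notin[of "(i,j)" "ws (cw s)"] unfolding cnt_def by (metis less_irrefl)
  then show "i \<in> V" "j \<in> V" using wsV[OF cw(1)[OF assms(1)]] by auto
  show "P i j > 0" using e cw(1)[OF assms(1)] unfolding wk_def by force
qed

lemma th_nonneg: "th s i j \<ge> 0" unfolding th_def by simp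

lemma tbar_th: assumes "wk s" "T s > 0" "i \<in> V"
  shows "tbar N (th s) i = real (count_list (butlast (cw s)) i) / real (T s)"
    "(\<Sum>j\<in>V. th s j i) = real (count_list (tl (cw s)) i) / real (T s)"
proof -
  have "real (count_list (butlast (cw s)) i) = sum_list (map (\<lambda>e. if fst e = i then 1 else 0) (ws (cw s)))"
    using count_list_map_fst[of i "ws (cw s)"] by (simp add: map_fst_ws)
  also have "\<dots> = real (T s) * (\<Sum>a\<in>V. \<Sum>j\<in>V. th s a j * (if a = i then 1 else 0))"
    using sum_cw[OF assms(1,2), of "\<lambda>e. if fst e = i then 1 else 0"] by simp
  also have "(\<Sum>a\<in>V. \<Sum>j\<in>V. th s a j * (if a = i then 1 else 0)) = (\<Sum>a\<in>V. if a = i then (\<Sum>j\<in>V. th s a j) else 0)"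
    by (intro sum.cong) auto
  also have "\<dots> = tbar N (th s) i" unfolding tbar_def using assms(3) by (subst sum.delta) auto
  finally show "tbar N (th s) i = real (count_list (butlast (cw s)) i) / real (T s)"
    using assms(2) by (simp add: field_simps)
  have "real (count_list (tl (cw s)) i) = sum_list (map (\<lambda>e. if snd e = i then 1 else 0) (ws (cw s)))"
    using count_list_map_snd[of i "ws (cw s)"] by (simp add: map_snd_ws)
  also have "\<dots> = real (T s) * (\<Sum>a\<in>V. \<Sum>j\<in>V. th s a j * (if j = i then 1 else 0))"
    using sum_cw[OF assms(1,2), of "\<lambda>e. if snd e = i then 1 else 0"] by simp
  also have "\<dots> = real (T s) * (\<Sum>j\<in>V. th s j i)"
    using assms(3) by (simp add: if_distrib cong: if_cong)
  finally show "(\<Sum>j\<in>V. th s j i) = real (count_list (tl (cw s)) i) / real (T s)"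
    using assms(2) by (simp add: field_simps)
qed

lemma th_Delta: assumes "wk s" "T s > 0" shows "th s \<in> Delta N P"
proof -
  have "real (T s) = sum_list (map (\<lambda>e. 1) (ws (cw s)))" unfolding T_def by (simp add: sum_list_triv)
  also have "\<dots> = real (T s) * (\<Sum>i\<in>V. \<Sum>j\<in>V. th s i j)" using sum_cw[OF assms, of "\<lambda>e. 1"] by simp
  finally have tot: "(\<Sum>i\<in>V. \<Sum>j\<in>V. th s i j) = 1" using assms(2) by simp
  have cl: "cw s \<noteq> []" "hd (cw s) = last (cw s)" using cw[OF assms(1)] unfolding wk_def by auto
  have bal: "(\<Sum>j\<in>V. th s i j) = (\<Sum>j\<in>V. th s j i)" if "i \<in> V" for i
    using tbar_th[OF assms that] closed_count[OF cl] unfolding tbar_def by simp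
  have ed: "th s i j = 0" if "(i,j) \<notin> edges N P" for i j
  proof (rule ccontr)
    assume "th s i j \<noteq> 0"
    then have "cnt s i j > 0" unfolding th_def by simp
    then show False using cnt_pos_edge[OF assms(1)] that unfolding edges_def by auto
  qed
  show ?thesis unfolding Delta_def using tot bal ed th_nonneg by auto
qed

end

definition Ln :: "nat \<Rightarrow> nat set \<Rightarrow> nat list set" where
  "Ln n A = {s. length s = n \<and> set s \<subseteq> A}"

lemma finite_Ln: "finite A \<Longrightarrow> finite (Ln n A)"
  unfolding Ln_def using finite_lists_length_eq[of A n] by (simp add: conj_commute)

lemma Ln_Suc: "Ln (Suc n) A = (\<lambda>(y,s). y # s) ` (A \<times> Ln n A)"
  unfolding Ln_def by (auto simp: length_Suc_conv image_iff)

lemma Ln_0: "Ln 0 A = {[]}" unfolding Ln_def by auto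

lemma qtrick_aux:
  fixes Q :: "nat \<Rightarrow> nat \<Rightarrow> real"
  assumes fin: "finite A" and nn: "\<And>i j. i \<in> A \<Longrightarrow> j \<in> A \<Longrightarrow> Q i j \<ge> 0"
    and rs: "\<And>i. i \<in> A \<Longrightarrow> (\<Sum>j\<in>A. Q i j) \<le> 1"
  shows "x \<in> A \<Longrightarrow> (\<Sum>s\<in>Ln n A. prod_list (map (\<lambda>(i,j). Q i j) (ws (x # s)))) \<le> 1"
proof (induction n arbitrary: x)
  case 0
  then show ?case by (simp add: Ln_0)
next
  case (Suc n)
  have inj: "inj_on (\<lambda>(y,s). y # s) (A \<times> Ln n A)" by (auto simp: inj_on_def)
  have "(\<Sum>s\<in>Ln (Suc n) A. prod_list (map (\<lambda>(i,j). Q i j) (ws (x # s))))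
      = (\<Sum>(y,s)\<in>A \<times> Ln n A. prod_list (map (\<lambda>(i,j). Q i j) (ws (x # y # s))))"
    unfolding Ln_Suc by (subst sum.reindex[OF inj]) (simp add: case_prod_beta)
  also have "\<dots> = (\<Sum>y\<in>A. Q x y * (\<Sum>s\<in>Ln n A. prod_list (map (\<lambda>(i,j). Q i j) (ws (y # s)))))"
    by (simp add: sum.cartesian_product[symmetric] sum_distrib_left)
  also have "\<dots> \<le> (\<Sum>y\<in>A. Q x y * 1)"
    using Suc nn by (intro sum_mono mult_left_mono) auto
  also have "\<dots> \<le> 1" using rs Suc.prems by simp
  finally show ?case .
qed

lemma qtrick:
  fixes Q :: "nat \<Rightarrow> nat \<Rightarrow> real"
  assumes fin: "finite A" and nn: "\<And>i j. i \<in> A \<Longrightarrow> j \<in> A \<Longrightarrow> Q i j \<ge> 0"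
    and rs: "\<And>i. i \<in> A \<Longrightarrow> (\<Sum>j\<in>A. Q i j) \<le> 1"
  shows "(\<Sum>s\<in>Ln (Suc n) A. prod_list (map (\<lambda>(i,j). Q i j) (ws s))) \<le> card A"
proof -
  have inj: "inj_on (\<lambda>(y,s). y # s) (A \<times> Ln n A)" by (auto simp: inj_on_def)
  have "(\<Sum>s\<in>Ln (Suc n) A. prod_list (map (\<lambda>(i,j). Q i j) (ws s)))
      = (\<Sum>(y,s)\<in>A \<times> Ln n A. prod_list (map (\<lambda>(i,j). Q i j) (ws (y # s))))"
    unfolding Ln_Suc by (subst sum.reindex[OF inj]) (simp add: case_prod_beta)
  also have "\<dots> = (\<Sum>y\<in>A. (\<Sum>s\<in>Ln n A. prod_list (map (\<lambda>(i,j). Q i j) (ws (y # s)))))"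
    by (simp add: sum.cartesian_product[symmetric])
  also have "\<dots> \<le> (\<Sum>y\<in>A. 1)" using qtrick_aux[OF assms] by (intro sum_mono) auto
  finally show ?thesis by simp
qed

lemma sum_list_le_len:
  fixes g :: "'a \<Rightarrow> real"
  shows "(\<And>x. x \<in> set xs \<Longrightarrow> g x \<le> c) \<Longrightarrow> sum_list (map g xs) \<le> real (length xs) * c"
proof (induction xs)
  case (Cons a xs)
  then have "g a \<le> c" "sum_list (map g xs) \<le> real (length xs) * c" by auto
  then show ?case by (simp add: algebra_simps)
qed simp

context chain begin

definition Qp :: "(nat \<Rightarrow> nat \<Rightarrow> real) \<Rightarrow> nat list \<Rightarrow> real" where
  "Qp \<theta> w = prod_list (map (\<lambda>(i,j). \<theta> i j / tbar N \<theta> i) (ws w))"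

lemma th_le_tbar: "i \<in> V \<Longrightarrow> j \<in> V \<Longrightarrow> \<theta> \<in> Delta N P \<Longrightarrow> \<theta> i j \<le> tbar N \<theta> i"
  unfolding tbar_def by (rule member_le_sum) (auto simp: Delta_def)

lemma Q_props: assumes "\<theta> \<in> Delta N P" "i \<in> V" "j \<in> V"
  shows "\<theta> i j / tbar N \<theta> i \<ge> 0" "\<theta> i j / tbar N \<theta> i \<le> 1"
proof -
  have a: "\<theta> i j \<ge> 0" using assms(1) by (simp add: Delta_def)
  have b: "\<theta> i j \<le> tbar N \<theta> i" using th_le_tbar[OF assms(2,3,1)] .
  show "\<theta> i j / tbar N \<theta> i \<ge> 0" using a tbar_nonneg[OF assms(1)] by simp
  show "\<theta> i j / tbar N \<theta> i \<le> 1"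
  proof (cases "tbar N \<theta> i = 0")
    case False
    then have "tbar N \<theta> i > 0" using tbar_nonneg[OF assms(1), of i] by simp
    then show ?thesis using b by simp
  qed simp
qed

lemma qtrick_th: assumes "\<theta> \<in> Delta N P"
  shows "(\<Sum>s\<in>Ln (Suc n) V. Qp \<theta> s) \<le> real N"
proof -
  have "(\<Sum>s\<in>Ln (Suc n) V. Qp \<theta> s) \<le> real (card V)" unfolding Qp_def
  proof (rule qtrick)
    show "\<And>i j. i \<in> V \<Longrightarrow> j \<in> V \<Longrightarrow> 0 \<le> \<theta> i j / tbar N \<theta> i" using Q_props[OF assms] by blast
    fix i assume i: "i \<in> V"
    show "(\<Sum>j\<in>V. \<theta> i j / tbar N \<theta> i) \<le> 1"
    proof (cases "tbar N \<theta> i = 0")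
      case False
      then show ?thesis by (simp add: sum_divide_distrib[symmetric] tbar_def)
    qed simp
  qed simp
  then show ?thesis by simp
qed

end

lemma prod_list_le1:
  fixes g :: "'a \<Rightarrow> real"
  shows "(\<And>x. x \<in> set xs \<Longrightarrow> 0 \<le> g x \<and> g x \<le> 1) \<Longrightarrow> prod_list (map g xs) \<le> 1"
proof (induction xs)
  case (Cons a xs)
  then have "0 \<le> g a" "g a \<le> 1" "prod_list (map g xs) \<le> 1" "0 \<le> prod_list (map g xs)"
    by (auto intro!: prod_list_nonneg)
  then show ?case by (simp add: mult_le_one)
qed simp

context chain begin

definition bm2 :: real where "bm2 = (\<Sum>i\<in>V. (\<beta> i)\<^sup>2)"

lemma bm2_nonneg: "bm2 \<ge> 0" unfolding bm2_def by (simp add: sum_nonneg)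

lemma th_pos_facts: assumes "wk s" "T s > 0" "i \<in> V" "j \<in> V" "th s i j \<noteq> 0"
  shows "th s i j > 0" "tbar N (th s) i > 0" "P i j > 0"
proof -
  have c: "cnt s i j > 0" using assms(5) unfolding th_def by simp
  show tp: "th s i j > 0" using c assms(2) unfolding th_def by simp
  show "P i j > 0" using cnt_pos_edge[OF assms(1) c] by simp
  have "th s i j \<le> tbar N (th s) i" using th_le_tbar[OF assms(3,4) th_Delta[OF assms(1,2)]] .
  then show "tbar N (th s) i > 0" using tp by simp
qed

lemma lnP_cw: assumes "wk s" "T s > 0"
  shows "sum_list (map (\<lambda>e. ln (P (fst e) (snd e))) (ws (cw s))) = - real (T s) * (kl_div N (th s) P + entr N (th s))"
proof -
  let ?t = "th s"
  have trm: "?t i j * ln (P i j) = (if ?t i j = 0 then 0 else ?t i j * ln (?t i j / tbar N ?t i))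
     - (if ?t i j = 0 then 0 else ?t i j * ln (?t i j / (tbar N ?t i * P i j)))" if "i \<in> V" "j \<in> V" for i j
  proof (cases "?t i j = 0")
    case False
    note f = th_pos_facts[OF assms that False]
    have "ln (?t i j / (tbar N ?t i * P i j)) = ln (?t i j) - ln (tbar N ?t i) - ln (P i j)"
      using f by (simp add: ln_div ln_mult)
    moreover have "ln (?t i j / tbar N ?t i) = ln (?t i j) - ln (tbar N ?t i)" using f by (simp add: ln_div)
    ultimately have d: "ln (?t i j / tbar N ?t i) - ln (?t i j / (tbar N ?t i * P i j)) = ln (P i j)" by linarith
    have "?t i j * ln (P i j) = ?t i j * ln (?t i j / tbar N ?t i) - ?t i j * ln (?t i j / (tbar N ?t i * P i j))"
      unfolding d[symmetric] by (simp add: right_diff_distrib)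
    then show ?thesis using False by simp
  qed simp
  have eq: "(\<Sum>i\<in>V. \<Sum>j\<in>V. ?t i j * ln (P i j)) = - (kl_div N ?t P + entr N ?t)"
    unfolding kl_div_def entr_def by (simp add: trm sum_subtractf)
  have A: "sum_list (map (\<lambda>e. ln (P (fst e) (snd e))) (ws (cw s))) = real (T s) * (\<Sum>i\<in>V. \<Sum>j\<in>V. ?t i j * ln (P i j))"
    using sum_cw[OF assms, of "\<lambda>e. ln (P (fst e) (snd e))"] by simp
  show ?thesis unfolding A eq by (simp add: algebra_simps)
qed

lemma lnQ_cw: assumes "wk s" "T s > 0"
  shows "sum_list (map (\<lambda>e. ln (th s (fst e) (snd e) / tbar N (th s) (fst e))) (ws (cw s))) = - real (T s) * entr N (th s)"
proof -
  let ?t = "th s"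
  have "(\<Sum>i\<in>V. \<Sum>j\<in>V. ?t i j * ln (?t i j / tbar N ?t i))
     = (\<Sum>i\<in>V. \<Sum>j\<in>V. (if ?t i j = 0 then 0 else ?t i j * ln (?t i j / tbar N ?t i)))"
    by (intro sum.cong refl) simp
  then have "(\<Sum>i\<in>V. \<Sum>j\<in>V. ?t i j * ln (?t i j / tbar N ?t i)) = - entr N ?t"
    unfolding entr_def by simp
  then show ?thesis using sum_cw[OF assms, of "\<lambda>e. ln (th s (fst e) (snd e) / tbar N (th s) (fst e))"] by simp
qed

lemma beta_cw: assumes "wk s" "T s > 0"
  shows "sum_list (map (\<lambda>e. (\<beta> (fst e))\<^sup>2) (ws (cw s))) = 2 * real (T s) * Bq N \<beta> (th s)"
proof -
  have "(\<Sum>i\<in>V. \<Sum>j\<in>V. th s i j * (\<beta> i)\<^sup>2) = (\<Sum>i\<in>V. tbar N (th s) i * (\<beta> i)\<^sup>2)"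
    unfolding tbar_def by (simp add: sum_distrib_right)
  also have "\<dots> = 2 * Bq N \<beta> (th s)" unfolding Bq_def by (simp add: sum_distrib_left)
  finally show ?thesis using sum_cw[OF assms, of "\<lambda>e. (\<beta> (fst e))\<^sup>2"] by simp
qed

lemma rs_facts: assumes "wk s"
  shows "last s \<in> V" "hd s \<in> V" "wk (rw (last s) (hd s))" "length (rw (last s) (hd s)) \<le> K"
proof -
  show h: "last s \<in> V" "hd s \<in> V" using assms unfolding wk_def using last_in_set hd_in_set by blast+
  show "wk (rw (last s) (hd s))" using rw[OF h] by simp
  show "length (rw (last s) (hd s)) \<le> K" using rw_len[OF h] by simp
qed

lemma pw_bound: assumes "wk s" "T s > 0"
  shows "pw s \<le> exp (- real (T s) * (kl_div N (th s) P + entr N (th s))) / cr"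
proof -
  let ?r = "rw (last s) (hd s)"
  have split: "pw (cw s) = pw s * pw ?r" unfolding pw_def cw(4)[OF assms(1)] by simp
  have "pw (cw s) = exp (sum_list (map (\<lambda>e. ln ((\<lambda>(i,j). P i j) e)) (ws (cw s))))"
    unfolding pw_def using cw(1)[OF assms(1)] unfolding wk_def
    by (intro prod_list_exp_ln) (auto simp: case_prod_beta)
  also have "\<dots> = exp (- real (T s) * (kl_div N (th s) P + entr N (th s)))"
    using lnP_cw[OF assms] by (simp add: case_prod_beta)
  finally have e: "pw s * pw ?r = exp (- real (T s) * (kl_div N (th s) P + entr N (th s)))" using split by simp
  have rpos: "pw ?r \<ge> cr" using cr_le rs_facts[OF assms(1)] by simp
  have "pw s \<ge> 0" using pw_pos[OF assms(1)] by simp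
  then have "pw s * cr \<le> pw s * pw ?r" using rpos by (intro mult_left_mono) auto
  then have "pw s * cr \<le> exp (- real (T s) * (kl_div N (th s) P + entr N (th s)))" using e by simp
  then show ?thesis using cr_pos by (simp add: field_simps)
qed

lemma Qp_bound: assumes "wk s" "T s > 0"
  shows "exp (- real (T s) * entr N (th s)) \<le> Qp (th s) s"
proof -
  let ?r = "rw (last s) (hd s)"
  let ?t = "th s"
  have D: "?t \<in> Delta N P" by (rule th_Delta[OF assms])
  have split: "Qp ?t (cw s) = Qp ?t s * Qp ?t ?r" unfolding Qp_def cw(4)[OF assms(1)] by simp
  have pos: "(\<lambda>(i,j). ?t i j / tbar N ?t i) e > 0" if "e \<in> set (ws (cw s))" for e
  proof -
    obtain i j where e: "e = (i,j)" by (cases e)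
    have "cnt s i j > 0" using that e count_list_0_iff[of "ws (cw s)" "(i,j)"] unfolding cnt_def by simp
    then have "?t i j \<noteq> 0" using assms(2) unfolding th_def by simp
    moreover have "i \<in> V" "j \<in> V" using wsV[OF cw(1)[OF assms(1)]] that e by auto
    ultimately show ?thesis using th_pos_facts[OF assms] e by auto
  qed
  have "Qp ?t (cw s) = exp (sum_list (map (\<lambda>e. ln ((\<lambda>(i,j). ?t i j / tbar N ?t i) e)) (ws (cw s))))"
    unfolding Qp_def using pos by (intro prod_list_exp_ln) auto
  also have "\<dots> = exp (- real (T s) * entr N ?t)"
    using lnQ_cw[OF assms] by (simp add: case_prod_beta)
  finally have e: "Qp ?t s * Qp ?t ?r = exp (- real (T s) * entr N ?t)" using split by simp
  have r1: "Qp ?t ?r \<le> 1" unfolding Qp_def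
  proof (rule prod_list_le1)
    fix e assume "e \<in> set (ws ?r)"
    then have "fst e \<in> V" "snd e \<in> V" using wsV[OF rs_facts(3)[OF assms(1)]] by auto
    then show "0 \<le> (\<lambda>(i,j). ?t i j / tbar N ?t i) e \<and> (\<lambda>(i,j). ?t i j / tbar N ?t i) e \<le> 1"
      using Q_props[OF D] by (simp add: case_prod_beta)
  qed
  have s0: "Qp ?t s \<ge> 0" unfolding Qp_def
  proof (rule prod_list_nonneg)
    fix x assume "x \<in> set (map (\<lambda>(i,j). ?t i j / tbar N ?t i) (ws s))"
    then obtain e where "e \<in> set (ws s)" "x = (\<lambda>(i,j). ?t i j / tbar N ?t i) e" by auto
    moreover have "fst e \<in> V" "snd e \<in> V" using wsV[OF assms(1)] calculation(1) by auto
    ultimately show "0 \<le> x" using Q_props[OF D] by (simp add: case_prod_beta)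
  qed
  have "Qp ?t s * Qp ?t ?r \<le> Qp ?t s" using r1 s0 by (simp add: mult_left_le)
  then show ?thesis using e by simp
qed

lemma beta_bound: assumes "wk s" "T s > 0"
  shows "2 * real (T s) * Bq N \<beta> (th s) \<le> sum_list (map (\<lambda>x. (\<beta> x)\<^sup>2) s) + real K * bm2"
proof -
  let ?r = "rw (last s) (hd s)"
  let ?g = "\<lambda>x. (\<beta> x)\<^sup>2"
  have "2 * real (T s) * Bq N \<beta> (th s) = sum_list (map ?g (butlast (cw s)))"
  proof -
    have "map (\<lambda>e. (\<beta> (fst e))\<^sup>2) (ws (cw s)) = map ?g (map fst (ws (cw s)))" by simp
    then show ?thesis using beta_cw[OF assms] by (simp only: map_fst_ws)
  qed
  also have "\<dots> \<le> sum_list (map ?g (cw s))"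
  proof -
    have "cw s \<noteq> []" using cw(1)[OF assms(1)] unfolding wk_def by simp
    then have "sum_list (map ?g (cw s)) = sum_list (map ?g (butlast (cw s) @ [last (cw s)]))"
      by (simp only: append_butlast_last_id[OF \<open>cw s \<noteq> []\<close>])
    also have "\<dots> = sum_list (map ?g (butlast (cw s))) + ?g (last (cw s))" by simp
    finally have "sum_list (map ?g (cw s)) = sum_list (map ?g (butlast (cw s))) + ?g (last (cw s))" .
    then show ?thesis by simp
  qed
  also have "\<dots> = sum_list (map ?g s) + sum_list (map ?g (tl ?r))" unfolding cw_def by simp
  also have "sum_list (map ?g (tl ?r)) \<le> real (length (tl ?r)) * bm2"
  proof (rule sum_list_le_len)
    fix x assume "x \<in> set (tl ?r)"
    then have "x \<in> set ?r" by (cases ?r) auto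
    then have "x \<in> V" using rs_facts(3)[OF assms(1)] unfolding wk_def by auto
    then show "?g x \<le> bm2" unfolding bm2_def by (rule member_le_sum) auto
  qed
  also have "real (length (tl ?r)) * bm2 \<le> real K * bm2"
    using rs_facts(4)[OF assms(1)] bm2_nonneg by (intro mult_right_mono) auto
  finally show ?thesis by simp
qed

end

lemma powr_subadd2:
  fixes x y p :: real
  assumes "x \<ge> 0" "y \<ge> 0" "0 < p" "p \<le> 1"
  shows "(x + y) powr p \<le> x powr p + y powr p"
proof (cases "x + y = 0")
  case True
  then have "x = 0" "y = 0" using assms by auto
  then show ?thesis by simp
next
  case False
  let ?S = "x + y"
  have S: "?S > 0" using False assms by simp
  have u: "x / ?S \<le> (x / ?S) powr p" "y / ?S \<le> (y / ?S) powr p"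
  proof -
    have "x / ?S \<ge> 0" "x / ?S \<le> 1" "y / ?S \<ge> 0" "y / ?S \<le> 1" using assms S by (auto simp: field_simps)
    then have "(x / ?S) powr 1 \<le> (x / ?S) powr p" "(y / ?S) powr 1 \<le> (y / ?S) powr p"
      using assms powr_mono'[of p 1 "x / ?S"] powr_mono'[of p 1 "y / ?S"] by auto
    then show "x / ?S \<le> (x / ?S) powr p" "y / ?S \<le> (y / ?S) powr p"
      using powr_one[OF \<open>x / ?S \<ge> 0\<close>] powr_one[OF \<open>y / ?S \<ge> 0\<close>] by (simp_all del: powr_one')
  qed
  have "1 = x / ?S + y / ?S" using S by (simp add: add_divide_distrib[symmetric])
  also have "\<dots> \<le> (x / ?S) powr p + (y / ?S) powr p" using u by simp
  also have "\<dots> = (x powr p + y powr p) / ?S powr p" by (simp add: powr_divide add_divide_distrib)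
  finally show ?thesis using S by (simp add: field_simps)
qed

lemma powr_subadd:
  fixes f :: "'a \<Rightarrow> real"
  assumes "finite C" "\<And>c. c \<in> C \<Longrightarrow> f c \<ge> 0" "0 < p" "p \<le> 1"
  shows "(\<Sum>c\<in>C. f c) powr p \<le> (\<Sum>c\<in>C. f c powr p)"
  using assms
proof (induction C rule: finite_induct)
  case (insert a C)
  have "(\<Sum>c\<in>insert a C. f c) powr p = (f a + (\<Sum>c\<in>C. f c)) powr p" using insert by simp
  also have "\<dots> \<le> f a powr p + (\<Sum>c\<in>C. f c) powr p"
    using insert by (intro powr_subadd2) (auto intro: sum_nonneg)
  also have "\<dots> \<le> f a powr p + (\<Sum>c\<in>C. f c powr p)" using insert by simp
  finally show ?case using insert by simp
qed simp

lemma normal_shift: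
  fixes a b x :: real
  shows "std_normal_density x * exp (a * x - b) = exp (a\<^sup>2 / 2 - b) * normal_density a 1 x"
proof -
  have "exp (- x\<^sup>2 / 2) * exp (a * x - b) = exp (a\<^sup>2 / 2 - b) * exp (- (x - a)\<^sup>2 / 2)"
  proof -
    have "- x\<^sup>2 / 2 + (a * x - b) = a\<^sup>2 / 2 - b + (- (x - a)\<^sup>2 / 2)"
      by (simp add: power2_eq_square field_simps)
    then show ?thesis by (simp add: exp_add[symmetric])
  qed
  then show ?thesis unfolding normal_density_def by (simp add: algebra_simps)
qed

lemma (in prob_space) gauss_exp:
  fixes Z :: "'a \<Rightarrow> real"
  assumes D: "distributed M lborel Z std_normal_density"
  shows "integrable M (\<lambda>\<omega>. exp (a * Z \<omega> - b))" "(\<integral>\<omega>. exp (a * Z \<omega> - b) \<partial>M) = exp (a\<^sup>2 / 2 - b)"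
proof -
  have m: "(\<lambda>x. exp (a * x - b)) \<in> borel_measurable lborel" by measurable
  have "integrable lborel (\<lambda>x. std_normal_density x * exp (a * x - b))"
    unfolding normal_shift by simp
  then show "integrable M (\<lambda>\<omega>. exp (a * Z \<omega> - b))"
    using distributed_integrable[OF D m] by simp
  have "(\<integral>x. std_normal_density x * exp (a * x - b) \<partial>lborel) = exp (a\<^sup>2 / 2 - b)"
    unfolding normal_shift by simp
  then show "(\<integral>\<omega>. exp (a * Z \<omega> - b) \<partial>M) = exp (a\<^sup>2 / 2 - b)"
    using distributed_integral[OF D m] by simp
qed


locale mloc = chain N P \<pi> \<beta> + prob_space M
  for N P \<pi> \<beta> and M :: "'a measure" +
  fixes X :: "nat \<Rightarrow> nat \<Rightarrow> 'a \<Rightarrow> real"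
  assumes indep: "indep_vars (\<lambda>_. borel) (\<lambda>(i, k). X i k) ({1..N} \<times> {1..})"
    and distr: "\<And>i k. i \<in> {1..N} \<Longrightarrow> k \<ge> 1 \<Longrightarrow> distributed M lborel (X i k) std_normal_density"
begin

lemma Xm: "i \<in> V \<Longrightarrow> k \<ge> 1 \<Longrightarrow> X i k \<in> borel_measurable M"
  using distributed_measurable[OF distr] by simp

lemma prod_gauss:
  fixes c d :: "nat \<Rightarrow> real"
  assumes sV: "set s \<subseteq> V"
  shows "integrable M (\<lambda>\<omega>. \<Prod>k<length s. exp (c (s!k) * X (s!k) (Suc k) \<omega> - d (s!k)))"
    "(\<integral>\<omega>. (\<Prod>k<length s. exp (c (s!k) * X (s!k) (Suc k) \<omega> - d (s!k))) \<partial>M)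
       = (\<Prod>k<length s. exp ((c (s!k))\<^sup>2 / 2 - d (s!k)))"
proof -
  define g where "g k = (s!k, Suc k)" for k
  define I where "I = g ` {..<length s}"
  define Z where "Z q \<omega> = exp (c (fst q) * (case q of (i,k) \<Rightarrow> X i k) \<omega> - d (fst q))" for q \<omega>
  have inj: "inj_on g {..<length s}" unfolding g_def inj_on_def by auto
  have IV: "I \<subseteq> V \<times> {1..}" unfolding I_def g_def using sV by (auto simp: nth_mem subsetD)
  have ind0: "indep_vars (\<lambda>_. borel) (\<lambda>q \<omega>. (\<lambda>x. exp (c (fst q) * x - d (fst q))) ((\<lambda>(i, k). X i k) q \<omega>)) (V \<times> {1..})"
    by (rule indep_vars_compose2[OF indep]) measurable
  have ind: "indep_vars (\<lambda>_. borel) Z I"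
    using indep_vars_subset[OF ind0 IV] unfolding Z_def by (simp add: case_prod_beta)
  have intZ: "integrable M (Z q)" and eZ: "(\<integral>\<omega>. Z q \<omega> \<partial>M) = exp ((c (fst q))\<^sup>2 / 2 - d (fst q))" if "q \<in> I" for q
  proof -
    obtain i k where q0: "q = (i,k)" by (cases q)
    then have "(i,k) \<in> V \<times> {1..}" using that IV by blast
    then have q: "q = (i,k)" "i \<in> V" "k \<ge> 1" using q0 by auto
    have "Z q = (\<lambda>\<omega>. exp (c i * X i k \<omega> - d i))" unfolding Z_def q by simp
    then show "integrable M (Z q)" "(\<integral>\<omega>. Z q \<omega> \<partial>M) = exp ((c (fst q))\<^sup>2 / 2 - d (fst q))"
      using gauss_exp[OF distr[OF q(2,3)], of "c i" "d i"] q by simp_all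
  qed
  have fin: "finite I" unfolding I_def by simp
  have re: "(\<Prod>k<length s. exp (c (s!k) * X (s!k) (Suc k) \<omega> - d (s!k))) = (\<Prod>q\<in>I. Z q \<omega>)" for \<omega>
    unfolding I_def by (subst prod.reindex[OF inj]) (simp add: Z_def g_def)
  show "integrable M (\<lambda>\<omega>. \<Prod>k<length s. exp (c (s!k) * X (s!k) (Suc k) \<omega> - d (s!k)))"
    unfolding re using indep_vars_integrable[OF fin ind intZ] by simp
  have "(\<integral>\<omega>. (\<Prod>q\<in>I. Z q \<omega>) \<partial>M) = (\<Prod>q\<in>I. \<integral>\<omega>. Z q \<omega> \<partial>M)"
    using indep_vars_lebesgue_integral[OF fin ind intZ] by simp
  also have "\<dots> = (\<Prod>q\<in>I. exp ((c (fst q))\<^sup>2 / 2 - d (fst q)))" using eZ by (intro prod.cong) auto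
  also have "\<dots> = (\<Prod>k<length s. exp ((c (s!k))\<^sup>2 / 2 - d (s!k)))"
    unfolding I_def by (subst prod.reindex[OF inj]) (simp add: g_def)
  finally show "(\<integral>\<omega>. (\<Prod>k<length s. exp (c (s!k) * X (s!k) (Suc k) \<omega> - d (s!k))) \<partial>M)
       = (\<Prod>k<length s. exp ((c (s!k))\<^sup>2 / 2 - d (s!k)))" unfolding re .
qed

definition Y :: "nat list \<Rightarrow> 'a \<Rightarrow> real" where
  "Y s \<omega> = path_prob \<pi> P s * exp (\<Sum>k<length s. \<beta> (s!k) * X (s!k) (k+1) \<omega> - (\<beta> (s!k))\<^sup>2 / 2)"

lemma lik_eq: "lik N \<pi> P \<beta> t (\<lambda>i k. X i k \<omega>) = (\<Sum>s\<in>paths N \<pi> P t. Y s \<omega>)"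
  unfolding lik_def Y_def by (intro sum.cong refl) (simp add: paths_def)

definition Ep :: "real \<Rightarrow> nat list \<Rightarrow> real" where
  "Ep p s = path_prob \<pi> P s powr p * (\<Prod>k<length s. exp ((p * \<beta> (s!k))\<^sup>2 / 2 - p * (\<beta> (s!k))\<^sup>2 / 2))"

definition Yp :: "real \<Rightarrow> nat list \<Rightarrow> 'a \<Rightarrow> real" where
  "Yp p s \<omega> = path_prob \<pi> P s powr p * (\<Prod>k<length s. exp ((p * \<beta> (s!k)) * X (s!k) (Suc k) \<omega> - p * (\<beta> (s!k))\<^sup>2 / 2))"

lemma Y_pos: "path_prob \<pi> P s > 0 \<Longrightarrow> Y s \<omega> > 0"
  unfolding Y_def by simp

lemma Ypow: assumes "path_prob \<pi> P s > 0" shows "Y s \<omega> powr p = Yp p s \<omega>"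
proof -
  have "Y s \<omega> powr p = path_prob \<pi> P s powr p * exp ((\<Sum>k<length s. \<beta> (s!k) * X (s!k) (k+1) \<omega> - (\<beta> (s!k))\<^sup>2 / 2) * p)"
    unfolding Y_def by (simp add: powr_mult exp_powr_real)
  also have "(\<Sum>k<length s. \<beta> (s!k) * X (s!k) (k+1) \<omega> - (\<beta> (s!k))\<^sup>2 / 2) * p
     = (\<Sum>k<length s. (p * \<beta> (s!k)) * X (s!k) (Suc k) \<omega> - p * (\<beta> (s!k))\<^sup>2 / 2)"
    by (simp add: sum_distrib_right) (intro sum.cong refl, simp add: algebra_simps)
  finally show ?thesis unfolding Yp_def by (simp add: exp_sum)
qed

lemma Yp_int: assumes "set s \<subseteq> V"
  shows "integrable M (Yp p s)" "(\<integral>\<omega>. Yp p s \<omega> \<partial>M) = Ep p s"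
proof -
  note pg = prod_gauss[OF assms, of "\<lambda>i. p * \<beta> i" "\<lambda>i. p * (\<beta> i)\<^sup>2 / 2"]
  show "integrable M (Yp p s)" unfolding Yp_def[abs_def] using pg(1) by simp
  show "(\<integral>\<omega>. Yp p s \<omega> \<partial>M) = Ep p s" unfolding Yp_def Ep_def using pg(2) by simp
qed

lemma Yp_nonneg: "Yp p s \<omega> \<ge> 0"
  unfolding Yp_def by (intro mult_nonneg_nonneg prod_nonneg) auto

lemma class_markov:
  assumes C: "finite C" "C \<subseteq> paths N \<pi> P t" and a: "a > 0" and p: "0 < p" "p \<le> 1"
  shows "measure M {\<omega>\<in>space M. a \<le> (\<Sum>s\<in>C. Y s \<omega>)} \<le> (\<Sum>s\<in>C. Ep p s) / a powr p"
proof -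
  have sC: "set s \<subseteq> V" "path_prob \<pi> P s > 0" if "s \<in> C" for s using that C unfolding paths_def by auto
  define u where "u \<omega> = (\<Sum>s\<in>C. Yp p s \<omega>)" for \<omega>
  have ui: "integrable M u" unfolding u_def
  proof (rule Bochner_Integration.integrable_sum)
    fix s assume "s \<in> C" then show "integrable M (Yp p s)" using Yp_int(1)[OF sC(1)] by blast
  qed
  have um: "u \<in> borel_measurable M" using ui by (rule borel_measurable_integrable)
  have ue: "(\<integral>\<omega>. u \<omega> \<partial>M) = (\<Sum>s\<in>C. Ep p s)"
    unfolding u_def using Yp_int[OF sC(1)] by (subst Bochner_Integration.integral_sum) auto
  have sub: "{\<omega>\<in>space M. a \<le> (\<Sum>s\<in>C. Y s \<omega>)} \<subseteq> {\<omega>\<in>space M. a powr p \<le> u \<omega>}"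
  proof safe
    fix \<omega> assume \<omega>: "\<omega> \<in> space M" "a \<le> (\<Sum>s\<in>C. Y s \<omega>)"
    have "a powr p \<le> (\<Sum>s\<in>C. Y s \<omega>) powr p" using \<omega> a p by (intro powr_mono2) auto
    also have "\<dots> \<le> (\<Sum>s\<in>C. Y s \<omega> powr p)"
      using C(1) p Y_pos[OF sC(2)] by (intro powr_subadd) (auto intro: less_imp_le)
    also have "\<dots> = u \<omega>" unfolding u_def using Ypow[OF sC(2)] by (intro sum.cong) auto
    finally show "a powr p \<le> u \<omega>" .
  qed
  have "measure M {\<omega>\<in>space M. a \<le> (\<Sum>s\<in>C. Y s \<omega>)} \<le> measure M {\<omega>\<in>space M. a powr p \<le> u \<omega>}"
    using sub um by (intro finite_measure_mono) auto
  also have "\<dots> \<le> (\<integral>\<omega>. u \<omega> \<partial>M) / a powr p"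
    by (rule integral_Markov_inequality_measure[OF ui, of "space M"])
      (use a in \<open>auto simp: u_def intro!: sum_nonneg Yp_nonneg\<close>)
  finally show ?thesis unfolding ue .
qed

end

locale mainloc = mloc N P \<pi> \<beta> M X
  for N P \<pi> \<beta> and M :: "'a measure" and X +
  fixes z p0 \<delta> :: real
  assumes zlb: "\<And>\<theta> \<xi>. \<theta> \<in> Delta N P \<Longrightarrow> Jfun N \<theta> \<xi> \<le> ereal (entr N \<theta>) \<Longrightarrow> z \<le> objective N P \<beta> \<theta> \<xi>"
    and p0: "0 < p0" "p0 \<le> 1" and dl: "\<delta> > 0"
begin

definition pth :: "(nat \<Rightarrow> nat \<Rightarrow> real) \<Rightarrow> real" where
  "pth \<theta> = (SOME p. p0 \<le> p \<and> p \<le> 1 \<and> p * (z - 2*p0*Bmax N \<beta>) \<le>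
     p*(kl_div N \<theta> P + entr N \<theta>) + p*(1-p)*Bq N \<beta> \<theta> - entr N \<theta>)"

lemma pth: assumes "\<theta> \<in> Delta N P"
  shows "p0 \<le> pth \<theta>" "pth \<theta> \<le> 1" "pth \<theta> * (z - 2*p0*Bmax N \<beta>) \<le>
     pth \<theta> * (kl_div N \<theta> P + entr N \<theta>) + pth \<theta> * (1 - pth \<theta>) * Bq N \<beta> \<theta> - entr N \<theta>"
proof -
  have "\<exists>p. p0 \<le> p \<and> p \<le> 1 \<and> p * (z - 2*p0*Bmax N \<beta>) \<le>
     p*(kl_div N \<theta> P + entr N \<theta>) + p*(1-p)*Bq N \<beta> \<theta> - entr N \<theta>"
    by (rule core_theta[OF assms zlb p0])
  from someI_ex[OF this] show "p0 \<le> pth \<theta>" "pth \<theta> \<le> 1" "pth \<theta> * (z - 2*p0*Bmax N \<beta>) \<le>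
     pth \<theta> * (kl_div N \<theta> P + entr N \<theta>) + pth \<theta> * (1 - pth \<theta>) * Bq N \<beta> \<theta> - entr N \<theta>"
    unfolding pth_def by blast+
qed

definition cc :: real where "cc = z - 2*p0*Bmax N \<beta> - \<delta>"
definition C3 :: real where "C3 = (1 + 1/cr) * exp (real K * bm2 + (real K + 1) * \<bar>cc\<bar>)"

lemma invcr_powr: assumes "0 \<le> p" "p \<le> 1" shows "(1/cr) powr p \<le> 1 + 1/cr"
proof (cases "1/cr \<le> 1")
  case True
  then have "(1/cr) powr p \<le> 1" using assms cr_pos by (intro powr_le1) auto
  moreover have "0 \<le> 1/cr" using cr_pos by simp
  ultimately show ?thesis by linarith
next
  case False
  then have "(1/cr) powr p \<le> (1/cr) powr 1" using assms by (intro powr_mono) auto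
  moreover have "(1/cr) powr 1 = 1/cr" using cr_pos by (simp add: powr_one)
  ultimately show ?thesis by linarith
qed

lemma per_path:
  assumes s: "s \<in> paths N \<pi> P t" and t: "t \<ge> 2"
  shows "Ep (pth (th s)) s * exp (pth (th s) * real t * cc) \<le> C3 * exp (- p0 * \<delta> * (real t - 1)) * Qp (th s) s"
proof -
  have w: "wk s" using paths_wk[OF s] t by simp
  have len: "length s = t" using s unfolding paths_def by simp
  have Tb: "length s - 1 \<le> T s" "T s \<le> length s + K - 2" using T_bounds[OF w] by auto
  have T0: "T s > 0" using Tb len t by simp
  let ?th = "th s" let ?p = "pth (th s)" let ?Tn = "real (T s)"
  let ?H = "entr N ?th" let ?D = "kl_div N ?th P" let ?B = "Bq N \<beta> ?th"
  have D: "?th \<in> Delta N P" by (rule th_Delta[OF w T0])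
  note pp = pth[OF D]
  have p01: "0 \<le> ?p" "?p \<le> 1" using pp p0 by auto
  have ppos: "path_prob \<pi> P s > 0" using s unfolding paths_def by simp
  have ne: "s \<noteq> []" using w unfolding wk_def by simp
  have hdV: "hd s \<in> V" using w ne unfolding wk_def using hd_in_set by blast
  have "path_prob \<pi> P s = \<pi> (hd s) * pw s" using path_prob_ws[OF ne] unfolding pw_def by simp
  also have "\<dots> \<le> 1 * pw s" using pi_le1[OF hdV] pw_pos[OF w] by (intro mult_right_mono) auto
  also have "\<dots> \<le> exp (- ?Tn * (?D + ?H)) / cr" using pw_bound[OF w T0] by simp
  finally have pb: "path_prob \<pi> P s \<le> exp (- ?Tn * (?D + ?H)) / cr" .
  have "path_prob \<pi> P s powr ?p \<le> (exp (- ?Tn * (?D + ?H)) / cr) powr ?p"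
    using ppos pb p01 by (intro powr_mono2) auto
  also have "\<dots> = exp (- ?Tn * (?D + ?H) * ?p) * (1/cr) powr ?p"
    by (simp add: powr_divide exp_powr_real)
  also have "\<dots> \<le> exp (- ?Tn * (?D + ?H) * ?p) * (1 + 1/cr)"
    using invcr_powr[OF p01] by (intro mult_left_mono) auto
  finally have A: "path_prob \<pi> P s powr ?p \<le> (1 + 1/cr) * exp (- ?p * ?Tn * (?D + ?H))"
    by (simp add: algebra_simps)
  define Sb where "Sb = sum_list (map (\<lambda>x. (\<beta> x)\<^sup>2) s)"
  have "(\<Prod>k<length s. exp ((?p * \<beta> (s!k))\<^sup>2 / 2 - ?p * (\<beta> (s!k))\<^sup>2 / 2))
     = exp (\<Sum>k<length s. (?p * ?p - ?p) / 2 * (\<beta> (s!k))\<^sup>2)"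
    by (simp add: exp_sum power2_eq_square algebra_simps diff_divide_distrib)
  also have "(\<Sum>k<length s. (?p * ?p - ?p) / 2 * (\<beta> (s!k))\<^sup>2) = (?p * ?p - ?p) / 2 * Sb"
    unfolding Sb_def sum_list_nth by (simp add: sum_distrib_left)
  finally have Bprod: "(\<Prod>k<length s. exp ((?p * \<beta> (s!k))\<^sup>2 / 2 - ?p * (\<beta> (s!k))\<^sup>2 / 2)) = exp ((?p * ?p - ?p) / 2 * Sb)" .
  have Sbb: "2 * ?Tn * ?B \<le> Sb + real K * bm2" unfolding Sb_def by (rule beta_bound[OF w T0])
  have ppneg: "?p * ?p - ?p \<le> 0" using p01 mult_left_le[of ?p ?p] by simp
  have "(?p * ?p - ?p) / 2 * Sb \<le> (?p * ?p - ?p) / 2 * (2 * ?Tn * ?B - real K * bm2)"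
    using Sbb ppneg by (intro mult_left_mono_neg) auto
  also have "\<dots> = - ?p * (1 - ?p) * ?Tn * ?B + ((?p - ?p * ?p) / 2) * (real K * bm2)"
    by (simp add: field_simps)
  also have "((?p - ?p * ?p) / 2) * (real K * bm2) \<le> 1 * (real K * bm2)"
  proof (rule mult_right_mono)
    have "?p * ?p \<ge> 0" by simp
    then have "?p - ?p * ?p \<le> 2" using p01 by linarith
    then show "(?p - ?p * ?p) / 2 \<le> 1" by simp
  qed (use bm2_nonneg in auto)
  finally have Bb: "(?p * ?p - ?p) / 2 * Sb \<le> - ?p * (1 - ?p) * ?Tn * ?B + real K * bm2" by simp
  have tT: "\<bar>real t - ?Tn\<bar> \<le> real K + 1" using Tb len by auto
  have "?p * real t * cc = ?p * ?Tn * cc + ?p * ((real t - ?Tn) * cc)" by (simp add: algebra_simps)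
  also have "?p * ((real t - ?Tn) * cc) \<le> (real K + 1) * \<bar>cc\<bar>"
  proof -
    have "?p * ((real t - ?Tn) * cc) \<le> ?p * \<bar>(real t - ?Tn) * cc\<bar>" using p01 by (intro mult_left_mono) auto
    also have "\<dots> \<le> 1 * \<bar>(real t - ?Tn) * cc\<bar>" using p01 by (intro mult_right_mono) auto
    also have "\<dots> = \<bar>real t - ?Tn\<bar> * \<bar>cc\<bar>" by (simp add: abs_mult)
    also have "\<dots> \<le> (real K + 1) * \<bar>cc\<bar>" using tT by (intro mult_right_mono) auto
    finally show ?thesis .
  qed
  finally have Cb: "?p * real t * cc \<le> ?p * ?Tn * cc + (real K + 1) * \<bar>cc\<bar>" by simp
  have core: "?p * cc \<le> ?p * (?D + ?H) + ?p * (1 - ?p) * ?B - ?H - p0 * \<delta>"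
  proof -
    have "?p * cc = ?p * (z - 2*p0*Bmax N \<beta>) - ?p * \<delta>" unfolding cc_def by (simp add: algebra_simps)
    moreover have "p0 * \<delta> \<le> ?p * \<delta>" using pp(1) dl by (intro mult_right_mono) auto
    ultimately show ?thesis using pp(3) by linarith
  qed
  have "?Tn * (?p * cc) \<le> ?Tn * (?p * (?D + ?H) + ?p * (1 - ?p) * ?B - ?H - p0 * \<delta>)"
    using core by (intro mult_left_mono) auto
  then have E: "- ?p * ?Tn * (?D + ?H) + (- ?p * (1 - ?p) * ?Tn * ?B) + ?p * ?Tn * cc
      \<le> - ?Tn * ?H - p0 * \<delta> * ?Tn"
    by (simp add: algebra_simps)
  have Tt: "p0 * \<delta> * (real t - 1) \<le> p0 * \<delta> * ?Tn" using Tb len p0 dl by (intro mult_left_mono) auto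
  have "Ep ?p s * exp (?p * real t * cc)
      = path_prob \<pi> P s powr ?p * exp ((?p * ?p - ?p) / 2 * Sb) * exp (?p * real t * cc)"
    unfolding Ep_def Bprod by simp
  also have "\<dots> \<le> ((1 + 1/cr) * exp (- ?p * ?Tn * (?D + ?H))) * exp (- ?p * (1 - ?p) * ?Tn * ?B + real K * bm2)
        * exp (?p * ?Tn * cc + (real K + 1) * \<bar>cc\<bar>)"
    using A Bb Cb cr_pos by (intro mult_mono) auto
  also have "\<dots> = C3 * exp (- ?p * ?Tn * (?D + ?H) + (- ?p * (1 - ?p) * ?Tn * ?B) + ?p * ?Tn * cc)"
    unfolding C3_def by (simp add: exp_add[symmetric] algebra_simps)
  also have "\<dots> \<le> C3 * exp (- ?Tn * ?H - p0 * \<delta> * (real t - 1))"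
    using E Tt cr_pos unfolding C3_def by (intro mult_left_mono) auto
  also have "\<dots> = C3 * exp (- p0 * \<delta> * (real t - 1)) * exp (- ?Tn * ?H)"
    by (simp add: exp_add[symmetric] algebra_simps)
  also have "\<dots> \<le> C3 * exp (- p0 * \<delta> * (real t - 1)) * Qp ?th s"
    using Qp_bound[OF w T0] cr_pos unfolding C3_def by (intro mult_left_mono) auto
  finally show ?thesis .
qed

end

lemma polyexp:
  fixes x \<eta> :: real
  assumes "x \<ge> 0" "\<eta> > 0"
  shows "x ^ m \<le> (real m / \<eta>) ^ m * exp (\<eta> * x)"
proof (cases "m = 0")
  case True
  then show ?thesis using assms by simp
next
  case False
  have e: "(1 + \<eta> * x / real m) ^ m \<le> exp (\<eta> * x)"
  proof (rule exp_ge_one_plus_x_over_n_power_n)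
    have "\<eta> * x \<ge> 0" using assms by simp
    then show "\<eta> * x \<ge> - real m" by linarith
  qed (use False in auto)
  have "x = (real m / \<eta>) * (\<eta> * x / real m)" using False assms by (simp add: field_simps)
  also have "\<dots> \<le> (real m / \<eta>) * (1 + \<eta> * x / real m)" using assms by (intro mult_left_mono) auto
  finally have "x ^ m \<le> ((real m / \<eta>) * (1 + \<eta> * x / real m)) ^ m" using assms by (intro power_mono) auto
  also have "\<dots> = (real m / \<eta>) ^ m * (1 + \<eta> * x / real m) ^ m" by (rule power_mult_distrib)
  also have "\<dots> \<le> (real m / \<eta>) ^ m * exp (\<eta> * x)" using e assms by (intro mult_left_mono) auto
  finally show ?thesis .
qed

context chain begin

lemma paths_sub: "paths N \<pi> P t \<subseteq> Ln t V" unfolding paths_def Ln_def by auto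

lemma finite_paths: "finite (paths N \<pi> P t)"
  using finite_subset[OF paths_sub finite_Ln[of V t]] by simp

lemma has_succ: assumes "i \<in> V" shows "\<exists>j\<in>V. P i j > 0"
proof (rule ccontr)
  assume "\<not> ?thesis"
  then have "(\<Sum>j\<in>V. P i j) \<le> 0" by (intro sum_nonpos) (auto simp: not_less)
  then show False using rs assms unfolding row_stochastic_def by auto
qed

lemma paths_ne: assumes "t \<ge> 1" shows "paths N \<pi> P t \<noteq> {}"
proof -
  define nx where "nx i = (SOME j. j \<in> V \<and> P i j > 0)" for i
  have nx: "nx i \<in> V" "P i (nx i) > 0" if "i \<in> V" for i
    using someI_ex[OF has_succ[OF that, unfolded Bex_def]] unfolding nx_def by auto
  define q where "q k = (nx ^^ k) 1" for k
  have qV: "q k \<in> V" for k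
  proof (induction k)
    case 0 then show ?case using N1 unfolding q_def by simp
  next
    case (Suc k) then show ?case using nx(1)[of "q k"] unfolding q_def by simp
  qed
  have qS: "q (Suc k) = nx (q k)" for k unfolding q_def by simp
  define s where "s = map q [0..<t]"
  have sn: "k < t \<Longrightarrow> s ! k = q k" for k unfolding s_def by simp
  have "path_prob \<pi> P s = \<pi> (q 0) * (\<Prod>k<t - 1. P (q k) (q (Suc k)))"
    unfolding path_prob_def s_def using assms by (intro arg_cong2[where f="(*)"] prod.cong) auto
  also have "\<dots> > 0" using pi_pos[OF qV] nx[OF qV] qS by (intro mult_pos_pos prod_pos) auto
  finally have "s \<in> paths N \<pi> P t" unfolding paths_def s_def using qV by auto
  then show ?thesis by auto
qed

definition Mset :: "nat \<Rightarrow> (nat \<Rightarrow> nat \<Rightarrow> nat) set" where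
  "Mset B = {m. \<forall>i j. m i j \<le> B \<and> ((i,j) \<notin> V \<times> V \<longrightarrow> m i j = 0)}"

lemma card_Mset: "finite (Mset B) \<and> card (Mset B) \<le> (B+1) ^ (N*N)"
proof -
  define r where "r m = restrict (\<lambda>(i,j). m i j) (V \<times> V)" for m :: "nat \<Rightarrow> nat \<Rightarrow> nat"
  have inj: "inj_on r (Mset B)"
  proof (rule inj_onI)
    fix m m' assume m: "m \<in> Mset B" "m' \<in> Mset B" "r m = r m'"
    show "m = m'"
    proof (intro ext)
      fix i j
      show "m i j = m' i j"
      proof (cases "(i,j) \<in> V \<times> V")
        case True
        then show ?thesis using fun_cong[OF m(3), of "(i,j)"] unfolding r_def by simp
      next
        case False
        then show ?thesis using m(1,2) unfolding Mset_def by auto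
      qed
    qed
  qed
  have sub: "r ` Mset B \<subseteq> PiE (V \<times> V) (\<lambda>_. {0..B})"
  proof
    fix x assume "x \<in> r ` Mset B"
    then obtain m where m: "m \<in> Mset B" "x = r m" by blast
    have "\<forall>q\<in>V \<times> V. (\<lambda>(i,j). m i j) q \<in> {0..B}" using m(1) unfolding Mset_def by auto
    then show "x \<in> PiE (V \<times> V) (\<lambda>_. {0..B})" unfolding m(2) r_def by (subst restrict_PiE_iff) simp
  qed
  have fin: "finite (PiE (V \<times> V) (\<lambda>_. {0..B}))" by (intro finite_PiE) auto
  have "finite (Mset B)" using inj_on_finite[OF inj sub fin] .
  moreover have "card (Mset B) \<le> card (PiE (V \<times> V) (\<lambda>_. {0..B}))"
    using card_inj_on_le[OF inj sub fin] .
  moreover have "card (PiE (V \<times> V) (\<lambda>_. {0..B::nat})) = (B+1) ^ (N*N)"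
    by (simp add: card_PiE card_cartesian_product)
  ultimately show ?thesis by simp
qed

lemma th_in: assumes "s \<in> paths N \<pi> P t" "t \<ge> 1"
  shows "(cnt s, T s) \<in> Mset (t + K) \<times> {0..t+K}" "th s = (\<lambda>i j. real (fst (cnt s, T s) i j) / real (snd (cnt s, T s)))"
proof -
  have w: "wk s" using paths_wk assms by blast
  have len: "length s = t" using assms unfolding paths_def by simp
  have Tb: "T s \<le> t + K" using T_bounds(2)[OF w] len by simp
  have "cnt s i j \<le> T s" for i j unfolding cnt_def T_def by (rule count_le_length)
  moreover have "cnt s i j = 0" if "(i,j) \<notin> V \<times> V" for i j
    using that wsV[OF cw(1)[OF w]] count_notin[of "(i,j)" "ws (cw s)"] unfolding cnt_def by blast
  ultimately show "(cnt s, T s) \<in> Mset (t + K) \<times> {0..t+K}" unfolding Mset_def using Tb by (auto intro: order_trans)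
  show "th s = (\<lambda>i j. real (fst (cnt s, T s) i j) / real (snd (cnt s, T s)))" unfolding th_def[abs_def] by simp
qed

definition Th :: "nat \<Rightarrow> (nat \<Rightarrow> nat \<Rightarrow> real) set" where "Th t = th ` paths N \<pi> P t"

lemma card_Th: assumes "t \<ge> 1" shows "finite (Th t)" "real (card (Th t)) \<le> (real t + real K + 1) ^ (N*N+1)"
proof -
  define F where "F mT = (\<lambda>i j. real (fst mT i j) / real (snd mT))" for mT :: "(nat \<Rightarrow> nat \<Rightarrow> nat) \<times> nat"
  have sub: "Th t \<subseteq> F ` (Mset (t + K) \<times> {0..t+K})"
    unfolding Th_def F_def using th_in[OF _ assms] by blast
  have fin: "finite (Mset (t + K) \<times> {0..t+K})" using card_Mset by auto
  show "finite (Th t)" using finite_subset[OF sub] fin by auto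
  have "card (Th t) \<le> card (F ` (Mset (t + K) \<times> {0..t+K}))" using sub fin by (intro card_mono) auto
  also have "\<dots> \<le> card (Mset (t + K) \<times> {0..t+K})" using fin by (rule card_image_le)
  also have "\<dots> = card (Mset (t + K)) * (t + K + 1)" by (simp add: card_cartesian_product)
  also have "\<dots> \<le> (t + K + 1) ^ (N*N) * (t + K + 1)" using card_Mset by (intro mult_right_mono) auto
  finally have "card (Th t) \<le> (t + K + 1) ^ (N*N+1)" by (simp add: mult.commute)
  then have "real (card (Th t)) \<le> real ((t + K + 1) ^ (N*N+1))" by linarith
  moreover have "real ((t + K + 1) ^ (N*N+1)) = (real t + real K + 1) ^ (N*N+1)" by (simp only: of_nat_power of_nat_add of_nat_1)
  ultimately show "real (card (Th t)) \<le> (real t + real K + 1) ^ (N*N+1)" by linarith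
qed

end

context mainloc begin

definition cls :: "nat \<Rightarrow> (nat \<Rightarrow> nat \<Rightarrow> real) \<Rightarrow> nat list set" where
  "cls t \<theta> = {s \<in> paths N \<pi> P t. th s = \<theta>}"

definition thr :: "nat \<Rightarrow> real" where "thr t = exp (- real t * cc)"

definition ev :: "nat \<Rightarrow> 'a set" where
  "ev t = {\<omega>\<in>space M. real (card (Th t)) * thr t < (\<Sum>s\<in>paths N \<pi> P t. Y s \<omega>)}"

lemma Ym: assumes "set s \<subseteq> V" shows "Y s \<in> borel_measurable M"
proof -
  have Xk: "(\<lambda>\<omega>. X (s!k) (k+1) \<omega>) \<in> borel_measurable M" if "k < length s" for k
    using Xm[of "s!k" "k+1"] assms that nth_mem by fastforce
  have h1: "(\<lambda>\<omega>. \<Sum>k<length s. \<beta> (s!k) * X (s!k) (k+1) \<omega> - (\<beta> (s!k))\<^sup>2 / 2) \<in> borel_measurable M"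
    by (rule borel_measurable_sum) (intro borel_measurable_diff borel_measurable_times borel_measurable_const Xk, auto)
  have h2: "(\<lambda>\<omega>. exp (\<Sum>k<length s. \<beta> (s!k) * X (s!k) (k+1) \<omega> - (\<beta> (s!k))\<^sup>2 / 2)) \<in> borel_measurable M"
    using measurable_compose[OF h1 borel_measurable_exp] by simp
  show ?thesis unfolding Y_def[abs_def]
    by (intro borel_measurable_times borel_measurable_const h2)
qed

lemma sumY_meas: assumes "C \<subseteq> paths N \<pi> P t" shows "(\<lambda>\<omega>. \<Sum>s\<in>C. Y s \<omega>) \<in> borel_measurable M"
  by (rule borel_measurable_sum) (use assms Ym in \<open>auto simp: paths_def\<close>)

lemma Qp_nonneg: assumes "\<theta> \<in> Delta N P" "set s \<subseteq> V" shows "Qp \<theta> s \<ge> 0"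
  unfolding Qp_def
proof (rule prod_list_nonneg)
  fix x assume "x \<in> set (map (\<lambda>(i,j). \<theta> i j / tbar N \<theta> i) (ws s))"
  then obtain e where e: "e \<in> set (ws s)" "x = (\<lambda>(i,j). \<theta> i j / tbar N \<theta> i) e" by auto
  have "e \<in> set s \<times> set s" using set_ws e(1) by blast
  then have "fst e \<in> V" "snd e \<in> V" using assms(2) by auto
  then show "0 \<le> x" using Q_props[OF assms(1)] e(2) by (simp add: case_prod_beta)
qed

lemma class_bound:
  assumes t: "t \<ge> 2" and th: "\<theta> \<in> Th t"
  shows "measure M {\<omega>\<in>space M. thr t \<le> (\<Sum>s\<in>cls t \<theta>. Y s \<omega>)} \<le> C3 * exp (- p0 * \<delta> * (real t - 1)) * real N"
proof -
  obtain s0 where s0: "s0 \<in> paths N \<pi> P t" "\<theta> = th s0" using th unfolding Th_def by auto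
  have w0: "wk s0" using paths_wk[OF s0(1)] t by simp
  have "length s0 - 1 \<le> T s0" using T_bounds[OF w0] by simp
  moreover have "length s0 = t" using s0 unfolding paths_def by simp
  ultimately have T0: "T s0 > 0" using t by simp
  have D: "\<theta> \<in> Delta N P" using th_Delta[OF w0 T0] s0 by simp
  let ?p = "pth \<theta>"
  have p: "0 < ?p" "?p \<le> 1" using pth[OF D] p0 by auto
  have finC: "finite (cls t \<theta>)" using finite_paths unfolding cls_def by simp
  have Csub: "cls t \<theta> \<subseteq> paths N \<pi> P t" unfolding cls_def by auto
  have "measure M {\<omega>\<in>space M. thr t \<le> (\<Sum>s\<in>cls t \<theta>. Y s \<omega>)} \<le> (\<Sum>s\<in>cls t \<theta>. Ep ?p s) / thr t powr ?p"
    by (rule class_markov[OF finC Csub _ p]) (simp add: thr_def)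
  also have "\<dots> = (\<Sum>s\<in>cls t \<theta>. Ep ?p s * exp (?p * real t * cc))"
  proof -
    have e: "thr t powr ?p = exp (- (?p * real t * cc))" unfolding thr_def by (simp add: exp_powr_real algebra_simps)
    have "(\<Sum>s\<in>cls t \<theta>. Ep ?p s) / thr t powr ?p = (\<Sum>s\<in>cls t \<theta>. Ep ?p s) * exp (?p * real t * cc)"
      unfolding e by (simp add: exp_minus field_simps)
    then show ?thesis by (simp add: sum_distrib_right)
  qed
  also have "\<dots> \<le> (\<Sum>s\<in>cls t \<theta>. C3 * exp (- p0 * \<delta> * (real t - 1)) * Qp \<theta> s)"
  proof (rule sum_mono)
    fix s assume "s \<in> cls t \<theta>"
    then have "s \<in> paths N \<pi> P t" "th s = \<theta>" unfolding cls_def by auto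
    then show "Ep ?p s * exp (?p * real t * cc) \<le> C3 * exp (- p0 * \<delta> * (real t - 1)) * Qp \<theta> s"
      using per_path[of s t] t by simp
  qed
  also have "\<dots> = C3 * exp (- p0 * \<delta> * (real t - 1)) * (\<Sum>s\<in>cls t \<theta>. Qp \<theta> s)"
    by (simp add: sum_distrib_left)
  also have "(\<Sum>s\<in>cls t \<theta>. Qp \<theta> s) \<le> (\<Sum>s\<in>Ln t V. Qp \<theta> s)"
  proof (rule sum_mono2)
    show "finite (Ln t V)" by (rule finite_Ln) simp
    show "cls t \<theta> \<subseteq> Ln t V" using Csub paths_sub by blast
    show "\<And>b. b \<in> Ln t V - cls t \<theta> \<Longrightarrow> 0 \<le> Qp \<theta> b" using Qp_nonneg[OF D] unfolding Ln_def by auto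
  qed
  also have "(\<Sum>s\<in>Ln t V. Qp \<theta> s) \<le> real N"
  proof -
    have "t = Suc (t - 1)" using t by simp
    then show ?thesis using qtrick_th[OF D, of "t - 1"] by simp
  qed
  finally show ?thesis
    using cr_pos unfolding C3_def by (simp add: mult_left_mono)
qed

lemma C3_pos: "C3 > 0" unfolding C3_def using cr_pos by (simp add: add_pos_pos)

lemma ev_sets: "ev t \<in> sets M"
proof -
  have "(\<lambda>\<omega>. \<Sum>s\<in>paths N \<pi> P t. Y s \<omega>) \<in> borel_measurable M" by (rule sumY_meas[of _ t]) simp
  then show ?thesis unfolding ev_def by measurable
qed

lemma ev_bound: assumes t: "t \<ge> 2"
  shows "measure M (ev t) \<le> real (card (Th t)) * (C3 * exp (- p0 * \<delta> * (real t - 1)) * real N)"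
proof -
  define cs where "cs \<theta> = {\<omega>\<in>space M. thr t \<le> (\<Sum>s\<in>cls t \<theta>. Y s \<omega>)}" for \<theta>
  have finTh: "finite (Th t)" using card_Th t by simp
  have neTh: "Th t \<noteq> {}" using paths_ne[of t] t unfolding Th_def by auto
  have grp: "(\<Sum>s\<in>paths N \<pi> P t. Y s \<omega>) = (\<Sum>\<theta>\<in>Th t. \<Sum>s\<in>cls t \<theta>. Y s \<omega>)" for \<omega>
    unfolding cls_def Th_def by (rule sum.group[symmetric]) (auto simp: finite_paths Th_def[symmetric] finTh)
  have sub: "ev t \<subseteq> (\<Union>\<theta>\<in>Th t. cs \<theta>)"
  proof
    fix \<omega> assume \<omega>: "\<omega> \<in> ev t"
    show "\<omega> \<in> (\<Union>\<theta>\<in>Th t. cs \<theta>)"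
    proof (rule ccontr)
      assume "\<omega> \<notin> (\<Union>\<theta>\<in>Th t. cs \<theta>)"
      then have lt: "(\<Sum>s\<in>cls t \<theta>. Y s \<omega>) < thr t" if "\<theta> \<in> Th t" for \<theta>
        using \<omega> that unfolding cs_def ev_def by auto
      have "(\<Sum>\<theta>\<in>Th t. \<Sum>s\<in>cls t \<theta>. Y s \<omega>) < (\<Sum>\<theta>\<in>Th t. thr t)"
        using finTh neTh lt by (intro sum_strict_mono) auto
      then show False using \<omega> unfolding ev_def grp by simp
    qed
  qed
  have csm: "cs \<theta> \<in> sets M" for \<theta>
  proof -
    have "(\<lambda>\<omega>. \<Sum>s\<in>cls t \<theta>. Y s \<omega>) \<in> borel_measurable M" by (rule sumY_meas) (auto simp: cls_def)
    then show ?thesis unfolding cs_def by measurable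
  qed
  have "measure M (ev t) \<le> measure M (\<Union>\<theta>\<in>Th t. cs \<theta>)"
    using sub csm finTh by (intro finite_measure_mono) auto
  also have "\<dots> \<le> (\<Sum>\<theta>\<in>Th t. measure M (cs \<theta>))" using finTh csm by (intro measure_UNION_le) auto
  also have "\<dots> \<le> (\<Sum>\<theta>\<in>Th t. C3 * exp (- p0 * \<delta> * (real t - 1)) * real N)"
    unfolding cs_def using class_bound[OF t] by (intro sum_mono) auto
  finally show ?thesis by simp
qed

definition eta :: real where "eta = p0 * \<delta> / 2"
definition Cp :: real where "Cp = (real (N*N+1) / eta) ^ (N*N+1)"

lemma eta_pos: "eta > 0" unfolding eta_def using p0 dl by simp
lemma Cp_pos: "Cp > 0"
proof -
  have "real (N*N+1) > 0" by (simp only: of_nat_0_less_iff)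
  then show ?thesis unfolding Cp_def using eta_pos by (intro zero_less_power divide_pos_pos)
qed

lemma card_exp: assumes "t \<ge> 1"
  shows "real (card (Th t)) \<le> Cp * exp (eta * (real t + real K + 1))"
  using card_Th(2)[OF assms] polyexp[of "real t + real K + 1" eta "N*N+1"] eta_pos unfolding Cp_def by linarith

lemma ev_summable: "summable (\<lambda>t. measure M (ev t))"
proof -
  define Cs where "Cs = Cp * C3 * real N * exp (eta * (real K + 1) + p0 * \<delta>)"
  have b: "norm (measure M (ev t)) \<le> Cs * exp (- eta) ^ t" if "t \<ge> 2" for t
  proof -
    have "measure M (ev t) \<le> real (card (Th t)) * (C3 * exp (- p0 * \<delta> * (real t - 1)) * real N)"
      by (rule ev_bound[OF that])
    also have "\<dots> \<le> Cp * exp (eta * (real t + real K + 1)) * (C3 * exp (- p0 * \<delta> * (real t - 1)) * real N)"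
      using card_exp[of t] that C3_pos by (intro mult_right_mono) auto
    also have "\<dots> = Cs * exp (- eta * real t)"
      unfolding Cs_def by (simp add: exp_add[symmetric] eta_def field_simps)
    also have "\<dots> = Cs * exp (- eta) ^ t" by (simp add: exp_of_nat_mult[symmetric] mult.commute)
    finally show ?thesis by simp
  qed
  have "summable (\<lambda>t. Cs * exp (- eta) ^ t)" using eta_pos by (intro summable_mult summable_geometric) simp
  then show ?thesis using b by (rule summable_comparison_test')
qed

lemma AE_not_ev: "AE \<omega> in M. eventually (\<lambda>t. \<omega> \<in> space M - ev t) sequentially"
  by (rule borel_cantelli_AE1[OF ev_sets]) (auto simp: ev_summable emeasure_eq_measure)

lemma main_ineq:
  assumes conv: "AE \<omega> in M. (\<lambda>t. - (1 / real t) * ln (lik N \<pi> P \<beta> t (\<lambda>i k. X i k \<omega>))) \<longlonglongrightarrow> \<zeta>"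
  shows "cc - eta \<le> \<zeta>"
proof -
  define Dc where "Dc = ln Cp + eta * (real K + 1)"
  have "AE \<omega> in M. cc - eta \<le> \<zeta>"
    using conv AE_not_ev AE_space
  proof eventually_elim
    case (elim \<omega>)
    have ev: "eventually (\<lambda>t. cc - eta - Dc / real t \<le> - (1 / real t) * ln (lik N \<pi> P \<beta> t (\<lambda>i k. X i k \<omega>))) sequentially"
      using elim(2) eventually_ge_at_top[of 2]
    proof eventually_elim
      case (elim t)
      have t: "t \<ge> 2" using elim by simp
      have le: "(\<Sum>s\<in>paths N \<pi> P t. Y s \<omega>) \<le> real (card (Th t)) * thr t"
        using elim unfolding ev_def by auto
      have pos: "(\<Sum>s\<in>paths N \<pi> P t. Y s \<omega>) > 0"
        using finite_paths paths_ne[of t] t Y_pos unfolding paths_def by (intro sum_pos) auto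
      have "real (card (Th t)) * thr t \<le> Cp * exp (eta * (real t + real K + 1)) * thr t"
        using card_exp[of t] t by (intro mult_right_mono) (auto simp: thr_def)
      also have "\<dots> = exp (ln Cp + eta * (real t + real K + 1) - real t * cc)"
        using Cp_pos unfolding thr_def by (simp add: exp_add exp_diff exp_minus field_simps)
      finally have "lik N \<pi> P \<beta> t (\<lambda>i k. X i k \<omega>) \<le> exp (ln Cp + eta * (real t + real K + 1) - real t * cc)"
        using le unfolding lik_eq by simp
      then have "ln (lik N \<pi> P \<beta> t (\<lambda>i k. X i k \<omega>)) \<le> ln (exp (ln Cp + eta * (real t + real K + 1) - real t * cc))"
        using pos unfolding lik_eq by (subst ln_le_cancel_iff) auto
      then have "ln (lik N \<pi> P \<beta> t (\<lambda>i k. X i k \<omega>)) \<le> ln Cp + eta * (real t + real K + 1) - real t * cc"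
        by simp
      then have "- (1 / real t) * ln (lik N \<pi> P \<beta> t (\<lambda>i k. X i k \<omega>)) \<ge> - (1 / real t) * (ln Cp + eta * (real t + real K + 1) - real t * cc)"
        using t by (intro mult_left_mono_neg) auto
      moreover have "- (1 / real t) * (ln Cp + eta * (real t + real K + 1) - real t * cc) = cc - eta - Dc / real t"
        using t unfolding Dc_def by (simp add: field_simps)
      ultimately show ?case by simp
    qed
    have lim: "(\<lambda>t. cc - eta - Dc / real t) \<longlonglongrightarrow> cc - eta - 0"
      by (intro tendsto_intros)
    show ?case using tendsto_le[OF trivial_limit_sequentially elim(1) lim ev] by simp
  qed
  then show ?thesis by simp
qed

end

lemma Bmax_nonneg: "Bmax N \<beta> \<ge> 0" unfolding Bmax_def by (intro sum_nonneg) auto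

lemma (in mloc) z_le_zeta:
  assumes zlb: "\<And>\<theta> \<xi>. \<theta> \<in> Delta N P \<Longrightarrow> Jfun N \<theta> \<xi> \<le> ereal (entr N \<theta>) \<Longrightarrow> z \<le> objective N P \<beta> \<theta> \<xi>"
    and conv: "AE \<omega> in M. (\<lambda>t. - (1 / real t) * ln (lik N \<pi> P \<beta> t (\<lambda>i k. X i k \<omega>))) \<longlonglongrightarrow> \<zeta>"
  shows "z \<le> \<zeta>"
proof (rule field_le_epsilon)
  fix \<epsilon> :: real assume e: "0 < \<epsilon>"
  define Bm where "Bm = Bmax N \<beta>"
  have Bm: "Bm \<ge> 0" unfolding Bm_def by (rule Bmax_nonneg)
  define p0 where "p0 = min 1 (\<epsilon> / (4 * (Bm + 1)))"
  define \<delta> where "\<delta> = \<epsilon> / 4"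
  have p0: "0 < p0" "p0 \<le> 1" unfolding p0_def using e Bm by auto
  have dl: "\<delta> > 0" unfolding \<delta>_def using e by simp
  interpret mainloc N P \<pi> \<beta> M X z p0 \<delta>
    by unfold_locales (use zlb p0 dl in auto)
  have m: "cc - eta \<le> \<zeta>" by (rule main_ineq[OF conv])
  have "p0 * Bm \<le> (\<epsilon> / (4 * (Bm + 1))) * Bm" unfolding p0_def using Bm by (intro mult_right_mono) auto
  also have "\<dots> \<le> \<epsilon> / 4" using e Bm by (simp add: field_simps)
  finally have a: "2 * p0 * Bm \<le> \<epsilon> / 2" by simp
  have b: "p0 * \<delta> / 2 \<le> \<epsilon> / 8" unfolding \<delta>_def using p0 e by (simp add: field_simps)
  have d4: "\<delta> = \<epsilon> / 4" by (rule \<delta>_def)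
  have s1: "2 * p0 * Bm + \<delta> + p0 * \<delta> / 2 \<le> \<epsilon>" using a b d4 e by linarith
  have "z - \<epsilon> \<le> cc - eta" using s1 unfolding cc_def eta_def Bm_def[symmetric] by linarith
  then show "z \<le> \<zeta> + \<epsilon>" using m by simp
qed

theorem theorem2:
  fixes N :: nat and P :: "nat \<Rightarrow> nat \<Rightarrow> real" and \<pi> \<beta> :: "nat \<Rightarrow> real"
    and M :: "'a measure" and X :: "nat \<Rightarrow> nat \<Rightarrow> 'a \<Rightarrow> real" and \<zeta> :: real
  assumes "N \<ge> 1"
    and "row_stochastic N P" and "irreducible_chain N P" and "aperiodic_chain N P"
    and "stationary_pos N P \<pi>"
    and "prob_space M"
    and "prob_space.indep_vars M (\<lambda>_. borel) (\<lambda>(i, k). X i k) ({1..N} \<times> {1..})"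
    and "\<And>i k. i \<in> {1..N} \<Longrightarrow> k \<ge> 1 \<Longrightarrow> distributed M lborel (X i k) std_normal_density"
    and "AE \<omega> in M. (\<lambda>t. - (1 / real t) * ln (lik N \<pi> P \<beta> t (\<lambda>i k. X i k \<omega>))) \<longlonglongrightarrow> \<zeta>"
  shows "zeta_low N P \<beta> \<le> ereal \<zeta>"
proof -
  have ms: "mloc N P \<pi> M X"
    by (intro mloc.intro chain.intro mloc_axioms.intro assms(6)) (use assms in auto)
  interpret mloc N P \<pi> \<beta> M X by (rule ms)
  show ?thesis
  proof (rule ccontr)
    assume "\<not> ?thesis"
    then have "ereal \<zeta> < zeta_low N P \<beta>" by simp
    then obtain z where z: "ereal \<zeta> < ereal z" "ereal z < zeta_low N P \<beta>" using ereal_dense2 by blast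
    have zlb: "z \<le> objective N P \<beta> \<theta> \<xi>" if "\<theta> \<in> Delta N P" "Jfun N \<theta> \<xi> \<le> ereal (entr N \<theta>)" for \<theta> \<xi>
    proof -
      have "zeta_low N P \<beta> \<le> ereal (objective N P \<beta> \<theta> \<xi>)"
        unfolding zeta_low_def using that by (intro INF_lower2[of "(\<theta>, \<xi>)"]) auto
      then have "ereal z < ereal (objective N P \<beta> \<theta> \<xi>)" using z(2) by (rule order.strict_trans2[rotated])
      then show ?thesis by simp
    qed
    have "z \<le> \<zeta>" by (rule z_le_zeta[OF zlb assms(9)])
    then show False using z(1) by simp
  qed
qed


end
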